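(* Let $p>1$ and let $\varphi:\mathbb{R}^n\to\mathbb{R}\cup\{+\infty\}$ be proper and lower semicontinuous, and suppose $\varphi$ satisfies the KL property with an exponent $\theta\in\big[\frac{p-1}{p},1\big)$ (at every point of $\operatorname{Dom}\partial\varphi$). Then: (a) for $\gamma>0$, the function $\Phi(x,y)=\varphi(y)+\frac{1}{p\gamma}\|x-y\|^p$ satisfies the KL property with the same exponent $\theta$; (b) if $\varphi$ is high-order prox-bounded with threshold $\gamma^{\varphi,p}>0$, then for any $\gamma\in(0,\gamma^{\varphi,p})$ the function $\varphi^p_\gamma$ satisfies the KL property with exponent $\theta$.
   Context: For a proper lsc $h$, $\partial h$ denotes the Mordukhovich (limiting) subdifferential and $\operatorname{Dom}\partial h=\{x:\partial h(x)\neq\emptyset\}$. $h$ satisfies the KL property at $\bar x\in\operatorname{Dom}\partial h$ if there are $r>0$, $\eta\in(0,+\infty]$ and a concave continuous $\phi:[0,\eta)\to[0,\infty)$ with $\phi(0)=0$, $\phi\in C^1(0,\eta)$, $\phi'>0$ on $(0,\eta)$, such that $\phi'(|h(x)-h(\bar x)|)\operatorname{dist}(0,\partial h(x))\ge1$ whenever $x\in\mathbb{B}(\bar x;r)\cap\operatorname{Dom}\partial h$ and $0<|h(x)-h(\bar x)|<\eta$; it does so with exponent $\theta\in[0,1)$ if $\phi(t)=ct^{1-\theta}$ for some $c>0$. $\varphi^p_\gamma(x):=\inf_y\big(\varphi(y)+\frac{1}{p\gamma}\|x-y\|^p\big)$; $\varphi$ is high-order prox-bounded if $\varphi^p_\gamma(x)>-\infty$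 for some $\gamma>0,x$, and the supremum of such $\gamma$ is the threshold $\gamma^{\varphi,p}$. *)

theory Defs
  imports "HOL-Analysis.Analysis"
begin

definition proper_fun :: "('a \<Rightarrow> ereal) \<Rightarrow> bool" where
  "proper_fun h \<longleftrightarrow> (\<forall>x. h x \<noteq> -\<infinity>) \<and> (\<exists>x. h x \<noteq> \<infinity>)"

definition lsc_fun :: "('a::topological_space \<Rightarrow> ereal) \<Rightarrow> bool" where
  "lsc_fun h \<longleftrightarrow> (\<forall>x. h x \<le> Liminf (at x) h)"

definition frechet_subdiff :: "('a::real_inner \<Rightarrow> ereal) \<Rightarrow> 'a \<Rightarrow> 'a set" where
  "frechet_subdiff h x = {v. \<bar>h x\<bar> \<noteq> \<infinity> \<and>
     (\<forall>\<epsilon>>0. \<forall>\<^sub>F y in at x. h x + ereal (v \<bullet> (y - x) - \<epsilon> * norm (y - x)) \<le> h y)}"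

definition limiting_subdiff :: "('a::real_inner \<Rightarrow> ereal) \<Rightarrow> 'a \<Rightarrow> 'a set" where
  "limiting_subdiff h x = {v. \<bar>h x\<bar> \<noteq> \<infinity> \<and>
     (\<exists>xs vs. xs \<longlonglongrightarrow> x \<and> (\<lambda>k. h (xs k)) \<longlonglongrightarrow> h x \<and>
        (\<forall>k. vs k \<in> frechet_subdiff h (xs k)) \<and> vs \<longlonglongrightarrow> v)}"

definition dom_subdiff :: "('a::real_inner \<Rightarrow> ereal) \<Rightarrow> 'a set" where
  "dom_subdiff h = {x. limiting_subdiff h x \<noteq> {}}"

definition desing :: "ereal \<Rightarrow> (real \<Rightarrow> real) \<Rightarrow> bool" where
  "desing \<eta> \<phi> \<longleftrightarrow>
     concave_on {t. 0 \<le> t \<and> ereal t < \<eta>} \<phi> \<and>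
     continuous_on {t. 0 \<le> t \<and> ereal t < \<eta>} \<phi> \<and>
     \<phi> 0 = 0 \<and> (\<forall>t. 0 \<le> t \<and> ereal t < \<eta> \<longrightarrow> 0 \<le> \<phi> t) \<and>
     (\<forall>t. 0 < t \<and> ereal t < \<eta> \<longrightarrow> \<phi> differentiable (at t)) \<and>
     continuous_on {t. 0 < t \<and> ereal t < \<eta>} (deriv \<phi>) \<and>
     (\<forall>t. 0 < t \<and> ereal t < \<eta> \<longrightarrow> 0 < deriv \<phi> t)"

definition KL_with :: "('a::real_inner \<Rightarrow> ereal) \<Rightarrow> 'a \<Rightarrow> (real \<Rightarrow> real) \<Rightarrow> bool" where
  "KL_with h xbar \<phi> \<longleftrightarrow>
     (\<exists>r>0. \<exists>\<eta>>0. desing \<eta> \<phi> \<and>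
        (\<forall>x. x \<in> cball xbar r \<and> x \<in> dom_subdiff h \<and>
              0 < \<bar>h x - h xbar\<bar> \<and> \<bar>h x - h xbar\<bar> < \<eta> \<longrightarrow>
              deriv \<phi> (real_of_ereal \<bar>h x - h xbar\<bar>) * infdist 0 (limiting_subdiff h x) \<ge> 1))"

definition KL_at :: "('a::real_inner \<Rightarrow> ereal) \<Rightarrow> 'a \<Rightarrow> bool" where
  "KL_at h xbar \<longleftrightarrow> xbar \<in> dom_subdiff h \<and> (\<exists>\<phi>. KL_with h xbar \<phi>)"

definition KL_exponent_at :: "('a::real_inner \<Rightarrow> ereal) \<Rightarrow> 'a \<Rightarrow> real \<Rightarrow> bool" where
  "KL_exponent_at h xbar \<theta> \<longleftrightarrow> 0 \<le> \<theta> \<and> \<theta> < 1 \<and> xbar \<in> dom_subdiff h \<and>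
     (\<exists>c>0. KL_with h xbar (\<lambda>t. c * t powr (1 - \<theta>)))"

definition KL_exponent :: "('a::real_inner \<Rightarrow> ereal) \<Rightarrow> real \<Rightarrow> bool" where
  "KL_exponent h \<theta> \<longleftrightarrow> (\<forall>x\<in>dom_subdiff h. KL_exponent_at h x \<theta>)"

definition hmoreau :: "('a::real_normed_vector \<Rightarrow> ereal) \<Rightarrow> real \<Rightarrow> real \<Rightarrow> 'a \<Rightarrow> ereal" where
  "hmoreau \<phi> p \<gamma> x = (INF y. \<phi> y + ereal (norm (x - y) powr p / (p * \<gamma>)))"

definition hprox_bounded :: "('a::real_normed_vector \<Rightarrow> ereal) \<Rightarrow> real \<Rightarrow> bool" where
  "hprox_bounded \<phi> p \<longleftrightarrow> (\<exists>\<gamma>>0. \<exists>x. hmoreau \<phi> p \<gamma> x > -\<infinity>)"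

definition hprox_threshold :: "('a::real_normed_vector \<Rightarrow> ereal) \<Rightarrow> real \<Rightarrow> ereal" where
  "hprox_threshold \<phi> p = Sup {ereal \<gamma> | \<gamma>. \<gamma> > 0 \<and> (\<exists>x. hmoreau \<phi> p \<gamma> x > -\<infinity>)}"

end

theory Submission
  imports Defs
begin


lemma npow_deriv:
  fixes z :: "'a::real_inner"
  assumes p: "p > 1"
  shows "((\<lambda>z. norm z powr p) has_derivative (\<lambda>d. ((p * norm z powr (p - 2)) *\<^sub>R z) \<bullet> d)) (at z)"
proof (cases "z = 0")
  case False
  have n: "norm z > 0" using False by simp
  have d1: "((\<lambda>t::real. t powr p) has_real_derivative p * norm z powr (p - 1)) (at (norm z))"
    using n by (auto intro!: derivative_eq_intros)
  have "((\<lambda>z. norm z powr p) has_derivative (\<lambda>d. (p * norm z powr (p - 1)) * (sgn z \<bullet> d))) (at z)"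
    using has_derivative_compose[OF has_derivative_norm[OF False] d1[unfolded has_field_derivative_def]]
    by (simp add: mult.commute o_def inner_commute)
  moreover have "(p * norm z powr (p - 1)) * (sgn z \<bullet> d) = ((p * norm z powr (p - 2)) *\<^sub>R z) \<bullet> d" for d
  proof -
    have "norm z powr (p - 1) = norm z powr (p - 2) * norm z"
      using n by (simp add: powr_diff power2_eq_square) 
    then show ?thesis using n by (simp add: sgn_div_norm field_simps)
  qed
  ultimately show ?thesis by simp
next
  case True
  have "((\<lambda>y. norm y powr (p - 1)) \<longlongrightarrow> 0) (at (0::'a))"
    using p by (intro tendsto_zero_powrI tendsto_norm_zero tendsto_ident_at) auto
  then have "((\<lambda>y. (norm y powr p - norm 0 powr p - 0) /\<^sub>R norm (y - 0)) \<longlongrightarrow> 0) (at (0::'a))"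
  proof (rule Lim_transform_eventually)
    show "\<forall>\<^sub>F y in at 0. norm y powr (p - 1) = (norm y powr p - norm 0 powr p - 0) /\<^sub>R norm (y - (0::'a))"
      by (auto simp: eventually_at_filter powr_diff divide_inverse mult.commute)
  qed
  then have "((\<lambda>z. norm z powr p) has_derivative (\<lambda>d. 0)) (at (0::'a))"
    by (simp add: has_derivative_at_within bounded_linear_zero)
  then show ?thesis using True by simp
qed




lemma psi_deriv:
  fixes c \<theta> t :: real
  assumes "t > 0"
  shows "((\<lambda>t. c * t powr (1 - \<theta>)) has_real_derivative c * ((1 - \<theta>) * t powr (- \<theta>))) (at t)"
  using assms by (auto intro!: derivative_eq_intros)

lemma psi_deriv_eq:
  fixes c \<theta> t :: real
  assumes "t > 0"
  shows "deriv (\<lambda>t. c * t powr (1 - \<theta>)) t = c * ((1 - \<theta>) * t powr (- \<theta>))"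
  using psi_deriv[OF assms] by (rule DERIV_imp_deriv)

lemma powr_concave0:
  fixes a :: real
  assumes a: "0 < a" "a < 1"
  shows "concave_on {0..} (\<lambda>t. t powr a)"
proof -
  have cv: "convex_on {0<..} (\<lambda>t. - (t powr a))"
  proof (rule convex_on_realI[where f' = "\<lambda>t. - (a * t powr (a - 1))"])
    show "connected ({0<..} :: real set)" by simp
    fix x :: real assume "x \<in> {0<..}"
    then show "((\<lambda>t. - (t powr a)) has_real_derivative - (a * x powr (a - 1))) (at x)"
      by (auto intro!: derivative_eq_intros)
  next
    fix x y :: real assume "x \<in> {0<..}" "y \<in> {0<..}" "x \<le> y"
    then have "y powr (a - 1) \<le> x powr (a - 1)"
      using a by (intro powr_mono2') auto
    then show "- (a * x powr (a - 1)) \<le> - (a * y powr (a - 1))"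
      using a by simp
  qed
  show ?thesis
  proof (rule concave_on_linorderI)
    show "convex {0::real..}" by simp
    fix t x y :: real
    assume t: "0 < t" "t < 1" and xy: "x \<in> {0..}" "y \<in> {0..}" "x < y"
    show "(1 - t) * x powr a + t * y powr a \<le> ((1 - t) *\<^sub>R x + t *\<^sub>R y) powr a"
    proof (cases "x = 0")
      case True
      have "t powr 1 \<le> t powr a"
        using t a by (intro powr_mono') auto
      then have "t \<le> t powr a" using t by simp
      then have "t * y powr a \<le> t powr a * y powr a"
        using xy by (intro mult_right_mono) auto
      then show ?thesis using True t xy by (simp add: powr_mult)
    next
      case False
      then have "x \<in> {0<..}" "y \<in> {0<..}" using xy by auto
      from convex_onD[OF cv, of t x y] this t
      show ?thesis by simp
    qed
  qed
qed

lemma desing_psi: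
  fixes c \<theta> :: real and \<eta> :: ereal
  assumes c: "c > 0" and th: "0 < \<theta>" "\<theta> < 1"
  shows "desing \<eta> (\<lambda>t. c * t powr (1 - \<theta>))"
proof -
  let ?S = "{t. 0 \<le> t \<and> ereal t < \<eta>}"
  let ?T = "{t. 0 < t \<and> ereal t < \<eta>}"
  have cS: "convex ?S"
  proof (rule convexI)
    fix x y u v :: real
    assume xyS: "x \<in> ?S" "y \<in> ?S" "0 \<le> u" "0 \<le> v" "u + v = 1"
    have "u * x + v * y \<le> max x y"
    proof -
      have "u * x \<le> u * max x y" "v * y \<le> v * max x y"
        using \<open>0 \<le> u\<close> \<open>0 \<le> v\<close> by (auto intro: mult_left_mono)
      then have "u * x + v * y \<le> (u + v) * max x y" by (simp add: distrib_right)
      then show ?thesis using \<open>u + v = 1\<close> by simp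
    qed
    moreover have "ereal (max x y) < \<eta>" using xyS(1,2) by (simp add: max_def)
    ultimately show "u *\<^sub>R x + v *\<^sub>R y \<in> ?S"
    proof -
      have "ereal (u * x + v * y) < \<eta>"
        using \<open>u * x + v * y \<le> max x y\<close> \<open>ereal (max x y) < \<eta>\<close> le_less_trans ereal_less_eq(3) by metis
      moreover have "0 \<le> u * x + v * y" using xyS by auto
      ultimately show ?thesis by simp
    qed
  qed
  have "concave_on ?S (\<lambda>t. t powr (1 - \<theta>))"
    unfolding concave_on_def
    by (rule convex_on_subset[OF powr_concave0[of "1 - \<theta>", unfolded concave_on_def]])
      (use th cS in auto)
  then have conc: "concave_on ?S (\<lambda>t. c * t powr (1 - \<theta>))"
    using c by (intro concave_on_cmul) auto
  have cont: "continuous_on ?S (\<lambda>t. c * t powr (1 - \<theta>))"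
    using th by (intro continuous_intros continuous_on_powr') auto
  have dc: "continuous_on ?T (deriv (\<lambda>t. c * t powr (1 - \<theta>)))"
  proof -
    have "continuous_on ?T (\<lambda>t. c * ((1 - \<theta>) * t powr (- \<theta>)))"
      by (intro continuous_intros) auto
    then show ?thesis
      by (rule continuous_on_cong[THEN iffD1, rotated 2]) (auto simp: psi_deriv_eq)
  qed
  have dif: "\<forall>t>0. (\<lambda>t. c * t powr (1 - \<theta>)) differentiable (at t)"
    using psi_deriv real_differentiable_def by blast
  show ?thesis unfolding desing_def
    using conc cont dc c th dif
    by (auto simp: psi_deriv_eq)
qed



lemma dom_finite: "x \<in> dom_subdiff h \<Longrightarrow> \<bar>h x\<bar> \<noteq> \<infinity>"
  by (auto simp: dom_subdiff_def limiting_subdiff_def)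

lemma infdist_approx:
  assumes "S \<noteq> {}" "infdist 0 S < b"
  shows "\<exists>u\<in>S. norm u < b"
proof -
  have "(INF a\<in>S. dist 0 a) < b" using assms infdist_notempty by metis
  moreover have "bdd_below ((\<lambda>a. dist 0 a) ` S)" by (auto intro: bdd_belowI[of _ 0])
  ultimately show ?thesis using assms(1) by (auto simp: cINF_less_iff)
qed

lemma infdist_lower:
  assumes "S \<noteq> {}" "\<And>u. u \<in> S \<Longrightarrow> m \<le> norm u"
  shows "m \<le> infdist 0 S"
  using assms by (auto simp: infdist_notempty intro!: cINF_greatest)

lemma KL_fail_seq:
  fixes h :: "'a::real_inner \<Rightarrow> ereal"
  assumes th: "0 < \<theta>" "\<theta> < 1" and xb: "xbar \<in> dom_subdiff h"
    and nKL: "\<not> KL_exponent_at h xbar \<theta>"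
  shows "\<exists>xs us. \<forall>k::nat. xs k \<in> cball xbar (1 / (real k + 1)) \<and> xs k \<in> dom_subdiff h \<and>
     0 < \<bar>h (xs k) - h xbar\<bar> \<and> \<bar>h (xs k) - h xbar\<bar> < ereal (1 / (real k + 1)) \<and>
     us k \<in> limiting_subdiff h (xs k) \<and>
     norm (us k) \<le> 2 * (real_of_ereal \<bar>h (xs k) - h xbar\<bar>) powr \<theta> / ((real k + 1) * (1 - \<theta>))"
proof -
  define P where "P k x u \<longleftrightarrow> x \<in> cball xbar (1 / (real k + 1)) \<and> x \<in> dom_subdiff h \<and>
     0 < \<bar>h x - h xbar\<bar> \<and> \<bar>h x - h xbar\<bar> < ereal (1 / (real k + 1)) \<and>
     u \<in> limiting_subdiff h x \<and>
     norm u \<le> 2 * (real_of_ereal \<bar>h x - h xbar\<bar>) powr \<theta> / ((real k + 1) * (1 - \<theta>))" for k :: nat and x u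
  have "\<exists>x u. P k x u" for k
  proof -
    define c where "c = real k + 1"
    have c: "c > 0" by (simp add: c_def)
    have nk: "\<not> KL_with h xbar (\<lambda>t. c * t powr (1 - \<theta>))"
      using nKL th xb c unfolding KL_exponent_at_def by auto
    have ds: "desing (ereal (1/c)) (\<lambda>t. c * t powr (1 - \<theta>))"
      by (rule desing_psi) (use c th in auto)
    obtain x where x: "x \<in> cball xbar (1/c)" "x \<in> dom_subdiff h"
      "0 < \<bar>h x - h xbar\<bar>" "\<bar>h x - h xbar\<bar> < ereal (1/c)"
      "\<not> deriv (\<lambda>t. c * t powr (1 - \<theta>)) (real_of_ereal \<bar>h x - h xbar\<bar>) * infdist 0 (limiting_subdiff h x) \<ge> 1"
    proof -
      have r: "1/c > 0" "ereal (1/c) > 0" using c by auto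
      show ?thesis using nk ds r that unfolding KL_with_def by blast
    qed
    define t where "t = real_of_ereal \<bar>h x - h xbar\<bar>"
    have fx: "\<bar>h x\<bar> \<noteq> \<infinity>" "\<bar>h xbar\<bar> \<noteq> \<infinity>" using dom_finite[OF x(2)] dom_finite[OF xb] by auto
    then have teq: "\<bar>h x - h xbar\<bar> = ereal t" unfolding t_def
      by (cases "h x"; cases "h xbar") auto
    have t: "t > 0" using x(3) teq by simp
    have ne: "limiting_subdiff h x \<noteq> {}" using x(2) by (simp add: dom_subdiff_def)
    let ?D = "infdist 0 (limiting_subdiff h x)"
    have "c * ((1 - \<theta>) * t powr (- \<theta>)) * ?D < 1"
      using x(5) psi_deriv_eq[OF t] unfolding t_def by simp
    then have "?D < t powr \<theta> / (c * (1 - \<theta>))"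
      using c th t by (simp add: field_simps powr_minus)
    then have "infdist 0 (limiting_subdiff h x) < 2 * t powr \<theta> / (c * (1 - \<theta>))"
    proof -
      have "0 < t powr \<theta> / (c * (1 - \<theta>))" using c th t by simp
      then show ?thesis using \<open>?D < _\<close> by simp
    qed
    from infdist_approx[OF ne this] obtain u where "u \<in> limiting_subdiff h x" "norm u < 2 * t powr \<theta> / (c * (1 - \<theta>))"
      by auto
    then show ?thesis using x unfolding t_def c_def P_def
      by (intro exI[of _ x] exI[of _ u]) auto
  qed
  then obtain X U where "\<And>k. P k (X k) (U k)" by metis
  then show ?thesis unfolding P_def by blast
qed




lemma deriv_approx:
  fixes G :: "'a::real_inner \<Rightarrow> real"
  assumes d: "(G has_derivative (\<lambda>d. w \<bullet> d)) (at x)" and e: "\<epsilon> > 0"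
  shows "\<forall>\<^sub>F y in at x. \<bar>G y - G x - w \<bullet> (y - x)\<bar> \<le> \<epsilon> * norm (y - x)"
proof -
  have "((\<lambda>y. norm ((G y - G x) - w \<bullet> (y - x)) / norm (y - x)) \<longlongrightarrow> 0) (at x)"
    using d by (simp add: has_derivative_iff_norm)
  then have "\<forall>\<^sub>F y in at x. norm ((G y - G x) - w \<bullet> (y - x)) / norm (y - x) < \<epsilon>"
    using e by (auto dest: order_tendstoD(2))
  moreover have "\<forall>\<^sub>F y in at x. y \<noteq> x" by (simp add: eventually_at_filter)
  ultimately show ?thesis
    by eventually_elim (auto simp: field_simps)
qed

lemma grad_unique:
  fixes G :: "'a::real_inner \<Rightarrow> real"
  assumes d: "(G has_derivative (\<lambda>d. w \<bullet> d)) (at x)"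
    and sub: "\<And>\<epsilon>. \<epsilon> > 0 \<Longrightarrow> \<forall>\<^sub>F y in at x. G x + v \<bullet> (y - x) - \<epsilon> * norm (y - x) \<le> G y"
  shows "v = w"
proof (rule ccontr)
  assume "v \<noteq> w"
  define d where "d = v - w"
  have nd: "norm d > 0" using \<open>v \<noteq> w\<close> by (simp add: d_def)
  define \<epsilon> where "\<epsilon> = norm d / 4"
  have e: "\<epsilon> > 0" using nd by (simp add: \<epsilon>_def)
  have "\<forall>\<^sub>F y in at x. d \<bullet> (y - x) \<le> 2 * \<epsilon> * norm (y - x)"
    using sub[OF e] deriv_approx[OF d e]
    by eventually_elim (auto simp: d_def inner_diff_left)
  moreover have "filterlim (\<lambda>t. x + t *\<^sub>R d) (at x) (at_right 0)"
  proof (rule filterlim_atI)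
    have "((\<lambda>t. x + t *\<^sub>R d) \<longlongrightarrow> x + 0 *\<^sub>R d) (at_right 0)"
      by (intro tendsto_intros)
    then show "((\<lambda>t. x + t *\<^sub>R d) \<longlongrightarrow> x) (at_right 0)" by simp
    show "\<forall>\<^sub>F t in at_right 0. x + t *\<^sub>R d \<noteq> x"
      using nd by (auto simp: eventually_at_right_field intro!: exI[of _ 1])
  qed
  ultimately have "\<forall>\<^sub>F t in at_right (0::real). d \<bullet> (t *\<^sub>R d) \<le> 2 * \<epsilon> * norm (t *\<^sub>R d)"
    by (auto dest: filterlim_iff[THEN iffD1, rule_format])
  moreover have "\<forall>\<^sub>F t in at_right (0::real). t > 0" by (simp add: eventually_at_right_field) (auto intro!: exI[of _ 1])
  ultimately have "\<forall>\<^sub>F t in at_right (0::real). False"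
  proof eventually_elim
    case (elim t)
    then have "t * (d \<bullet> d) \<le> 2 * \<epsilon> * (t * norm d)" by simp
    then have "norm d * norm d \<le> 2 * \<epsilon> * norm d" using elim(2)
      by (simp add: power2_eq_square[symmetric] power2_norm_eq_inner[symmetric])
    moreover have "norm d * norm d > 0" using nd by simp
    ultimately show False unfolding \<epsilon>_def by linarith
  qed
  then show False by (simp add: eventually_False trivial_limit_at_right_real)
qed

lemma frechet_touch:
  fixes h :: "'a::real_inner \<Rightarrow> ereal"
  assumes v: "v \<in> frechet_subdiff h x"
    and d: "(G has_derivative (\<lambda>d. w \<bullet> d)) (at x)"
    and le: "\<forall>\<^sub>F y in at x. h y \<le> ereal (G y)" and eq: "h x = ereal (G x)"
  shows "v = w"
proof (rule grad_unique[OF d])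
  fix \<epsilon> :: real assume e: "\<epsilon> > 0"
  have "\<forall>\<^sub>F y in at x. h x + ereal (v \<bullet> (y - x) - \<epsilon> * norm (y - x)) \<le> h y"
    using v e by (auto simp: frechet_subdiff_def)
  then show "\<forall>\<^sub>F y in at x. G x + v \<bullet> (y - x) - \<epsilon> * norm (y - x) \<le> G y"
    using le
  proof eventually_elim
    case (elim y)
    have "ereal (G x + (v \<bullet> (y - x) - \<epsilon> * norm (y - x))) \<le> h y" using elim(1) by (simp add: eq)
    then have "ereal (G x + (v \<bullet> (y - x) - \<epsilon> * norm (y - x))) \<le> ereal (G y)" using elim(2) by (rule order_trans)
    then show ?case by simp
  qed
qed

lemma frechet_shift:
  fixes h :: "'a::real_inner \<Rightarrow> ereal"
  assumes fin: "\<bar>h x\<bar> \<noteq> \<infinity>"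
    and d: "(G has_derivative (\<lambda>d. q \<bullet> d)) (at x)"
    and sub: "\<And>\<epsilon>. \<epsilon> > 0 \<Longrightarrow> \<forall>\<^sub>F y in at x.
        h x + ereal (G x + u \<bullet> (y - x) - \<epsilon> * norm (y - x)) \<le> h y + ereal (G y)"
  shows "u - q \<in> frechet_subdiff h x"
  unfolding frechet_subdiff_def
proof (intro CollectI conjI allI impI fin)
  fix \<epsilon> :: real assume e: "\<epsilon> > 0"
  have e2: "\<epsilon> / 2 > 0" using e by simp
  show "\<forall>\<^sub>F y in at x. h x + ereal ((u - q) \<bullet> (y - x) - \<epsilon> * norm (y - x)) \<le> h y"
    using sub[OF e2] deriv_approx[OF d e2]
  proof eventually_elim
    case (elim y)
    obtain a where a: "h x = ereal a" using fin by (cases "h x") auto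
    show ?case
    proof (cases "h y")
      case (real b)
      then have "a + (G x + u \<bullet> (y - x) - \<epsilon> / 2 * norm (y - x)) \<le> b + G y"
        using elim(1) a by simp
      moreover have "G y - G x - \<epsilon> / 2 * norm (y - x) \<le> q \<bullet> (y - x)"
        using elim(2) abs_ge_self[of "G y - G x - q \<bullet> (y - x)"] by linarith
      ultimately have "a + ((u - q) \<bullet> (y - x) - \<epsilon> * norm (y - x)) \<le> b"
        by (simp add: inner_diff_left)
      then show ?thesis using a real by simp
    next
      case PInf then show ?thesis by simp
    next
      case MInf then show ?thesis using elim(1) a by simp
    qed
  qed
qed

lemma frechet_imp_limiting:
  assumes "v \<in> frechet_subdiff h x"
  shows "v \<in> limiting_subdiff h x"
proof -
  have "\<bar>h x\<bar> \<noteq> \<infinity>" using assms by (simp add: frechet_subdiff_def)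
  then show ?thesis unfolding limiting_subdiff_def
    apply (intro CollectI conjI)
     apply assumption
    apply (rule exI[of _ "\<lambda>_. x"], rule exI[of _ "\<lambda>_. v"])
    using assms by simp
qed




definition Wf :: "real \<Rightarrow> real \<Rightarrow> 'a::real_inner \<Rightarrow> 'a" where
  "Wf p \<gamma> z = (norm z powr (p - 2) / \<gamma>) *\<^sub>R z"

lemma N_deriv:
  fixes z :: "'a::real_inner"
  assumes p: "p > 1" and g: "\<gamma> > 0"
  shows "((\<lambda>z. norm z powr p / (p * \<gamma>)) has_derivative (\<lambda>d. Wf p \<gamma> z \<bullet> d)) (at z)"
proof -
  have "((\<lambda>z. 1 / (p * \<gamma>) * norm z powr p) has_derivative
      (\<lambda>d. 1 / (p * \<gamma>) * (((p * norm z powr (p - 2)) *\<^sub>R z) \<bullet> d))) (at z)"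
    by (rule has_derivative_mult_right[OF npow_deriv[OF p]])
  moreover have "(\<lambda>z. 1 / (p * \<gamma>) * norm z powr p) = (\<lambda>z. norm z powr p / (p * \<gamma>))" by auto
  moreover have "(\<lambda>d. 1 / (p * \<gamma>) * (((p * norm z powr (p - 2)) *\<^sub>R z) \<bullet> d)) = (\<lambda>d. Wf p \<gamma> z \<bullet> d)"
    using p g by (auto simp: Wf_def fun_eq_iff)
  ultimately show ?thesis by simp
qed

lemma N_deriv_x:
  fixes x y :: "'a::real_inner"
  assumes p: "p > 1" and g: "\<gamma> > 0"
  shows "((\<lambda>x'. norm (x' - y) powr p / (p * \<gamma>)) has_derivative (\<lambda>d. Wf p \<gamma> (x - y) \<bullet> d)) (at x)"
proof -
  have "((\<lambda>x'. x' - y) has_derivative (\<lambda>d. d)) (at x)"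
    by (auto intro!: derivative_eq_intros)
  from has_derivative_compose[OF this N_deriv[OF p g]] show ?thesis by simp
qed

lemma N_deriv_y:
  fixes x y :: "'a::real_inner"
  assumes p: "p > 1" and g: "\<gamma> > 0"
  shows "((\<lambda>y'. norm (x - y') powr p / (p * \<gamma>)) has_derivative (\<lambda>d. (- Wf p \<gamma> (x - y)) \<bullet> d)) (at y)"
proof -
  have "((\<lambda>y'. x - y') has_derivative (\<lambda>d. - d)) (at y)"
    by (auto intro!: derivative_eq_intros)
  from has_derivative_compose[OF this N_deriv[OF p g]] show ?thesis by simp
qed

lemma norm_Wf:
  assumes g: "\<gamma> > 0"
  shows "norm (Wf p \<gamma> z) = norm z powr (p - 1) / \<gamma>"
proof (cases "z = 0")
  case True then show ?thesis by (simp add: Wf_def)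
next
  case False
  then have n: "norm z > 0" by simp
  have "norm (Wf p \<gamma> z) = norm z powr (p - 2) / \<gamma> * norm z"
    using g by (simp add: Wf_def)
  also have "\<dots> = norm z powr (p - 1) / \<gamma>"
    using n by (simp add: powr_diff power2_eq_square)
  finally show ?thesis .
qed

lemma Wf_cont:
  fixes z :: "'a::real_inner"
  assumes p: "p > 1" and g: "\<gamma> > 0"
  shows "isCont (Wf p \<gamma>) z"
proof (cases "z = 0")
  case False
  then have "((\<lambda>z. (norm z powr (p - 2) / \<gamma>) *\<^sub>R z) \<longlongrightarrow> (norm z powr (p - 2) / \<gamma>) *\<^sub>R z) (at z)"
    using g by (intro tendsto_intros) auto
  then show ?thesis unfolding isCont_def Wf_def by simp
next
  case True
  have "((\<lambda>y. norm y powr (p - 1) / \<gamma>) \<longlongrightarrow> 0) (at (0::'a))"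
    using p by (intro tendsto_zero_powrI tendsto_norm_zero tendsto_ident_at tendsto_divide_zero) auto
  then have "((\<lambda>y. norm (Wf p \<gamma> y)) \<longlongrightarrow> 0) (at (0::'a))"
    using g by (simp add: norm_Wf)
  then have "(Wf p \<gamma> \<longlongrightarrow> 0) (at (0::'a))"
    by (rule tendsto_norm_zero_cancel)
  then show ?thesis using True unfolding isCont_def by (simp add: Wf_def)
qed

lemma frechet_prod:
  fixes \<phi> :: "'a::real_inner \<Rightarrow> ereal"
  assumes p: "p > 1" and g: "\<gamma> > 0"
    and ab: "(a, b) \<in> frechet_subdiff (\<lambda>(x, y). \<phi> y + ereal (norm (x - y) powr p / (p * \<gamma>))) (x, y)"
  shows "a = Wf p \<gamma> (x - y) \<and> b + Wf p \<gamma> (x - y) \<in> frechet_subdiff \<phi> y"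
proof -
  define \<Phi> where "\<Phi> = (\<lambda>(x, y). \<phi> y + ereal (norm (x - y) powr p / (p * \<gamma>)))"
  have fin: "\<bar>\<Phi> (x, y)\<bar> \<noteq> \<infinity>" using ab by (simp add: frechet_subdiff_def \<Phi>_def)
  then obtain c where c: "\<phi> y = ereal c" by (cases "\<phi> y") (auto simp: \<Phi>_def)
  have sub: "\<And>\<epsilon>. \<epsilon> > 0 \<Longrightarrow> \<forall>\<^sub>F z in at (x, y). \<Phi> (x, y) + ereal ((a, b) \<bullet> (z - (x, y)) - \<epsilon> * norm (z - (x, y))) \<le> \<Phi> z"
    using ab by (simp add: frechet_subdiff_def \<Phi>_def)
  have fx: "filterlim (\<lambda>x'. (x', y)) (at (x, y)) (at x)"
  proof (rule filterlim_atI)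
    show "((\<lambda>x'. (x', y)) \<longlongrightarrow> (x, y)) (at x)" by (intro tendsto_intros)
    show "\<forall>\<^sub>F x' in at x. (x', y) \<noteq> (x, y)" by (simp add: eventually_at_filter)
  qed
  have fy: "filterlim (\<lambda>y'. (x, y')) (at (x, y)) (at y)"
  proof (rule filterlim_atI)
    show "((\<lambda>y'. (x, y')) \<longlongrightarrow> (x, y)) (at y)" by (intro tendsto_intros)
    show "\<forall>\<^sub>F y' in at y. (x, y') \<noteq> (x, y)" by (simp add: eventually_at_filter)
  qed
  have A: "a = Wf p \<gamma> (x - y)"
  proof (rule grad_unique)
    show "((\<lambda>x'. c + norm (x' - y) powr p / (p * \<gamma>)) has_derivative (\<lambda>d. Wf p \<gamma> (x - y) \<bullet> d)) (at x)"
      using has_derivative_add[OF has_derivative_const N_deriv_x[OF p g, where x=x and y=y]] by simp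
    fix \<epsilon> :: real assume e: "\<epsilon> > 0"
    from filterlim_iff[THEN iffD1, OF fx, rule_format, OF sub[OF e]]
    show "\<forall>\<^sub>F x' in at x. c + norm (x - y) powr p / (p * \<gamma>) + a \<bullet> (x' - x) - \<epsilon> * norm (x' - x)
        \<le> c + norm (x' - y) powr p / (p * \<gamma>)"
      by eventually_elim (simp add: \<Phi>_def c norm_Pair)
  qed
  have B: "b - (- Wf p \<gamma> (x - y)) \<in> frechet_subdiff \<phi> y"
  proof (rule frechet_shift[where G = "\<lambda>y'. norm (x - y') powr p / (p * \<gamma>)"])
    show "\<bar>\<phi> y\<bar> \<noteq> \<infinity>" using c by simp
    show "((\<lambda>y'. norm (x - y') powr p / (p * \<gamma>)) has_derivative (\<lambda>d. (- Wf p \<gamma> (x - y)) \<bullet> d)) (at y)"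
      by (rule N_deriv_y[OF p g])
    fix \<epsilon> :: real assume e: "\<epsilon> > 0"
    from filterlim_iff[THEN iffD1, OF fy, rule_format, OF sub[OF e]]
    show "\<forall>\<^sub>F y' in at y. \<phi> y + ereal (norm (x - y) powr p / (p * \<gamma>) + b \<bullet> (y' - y) - \<epsilon> * norm (y' - y))
        \<le> \<phi> y' + ereal (norm (x - y') powr p / (p * \<gamma>))"
      by eventually_elim (simp add: \<Phi>_def c norm_Pair add.assoc add_diff_eq[symmetric])
  qed
  show ?thesis using A B by simp
qed




lemma N_cont:
  fixes z :: "'a::real_inner"
  assumes p: "p > 1" and g: "\<gamma> > 0"
  shows "isCont (\<lambda>z. norm z powr p / (p * \<gamma>)) z"
  using has_derivative_continuous[OF N_deriv[OF p g]] .

lemma ereal_cancel_fin: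
  assumes "\<bar>u\<bar> \<noteq> \<infinity>"
  shows "u + ereal n + ereal (- n) = u"
  using assms by (cases u) auto

lemma limiting_subdiffE:
  assumes "v \<in> limiting_subdiff h x"
  obtains xs vs where "\<bar>h x\<bar> \<noteq> \<infinity>" "xs \<longlonglongrightarrow> x" "(\<lambda>k. h (xs k)) \<longlonglongrightarrow> h x"
    "\<forall>k. vs k \<in> frechet_subdiff h (xs k)" "vs \<longlonglongrightarrow> v"
proof -
  from assms have "\<bar>h x\<bar> \<noteq> \<infinity>" "\<exists>xs vs. xs \<longlonglongrightarrow> x \<and> (\<lambda>k. h (xs k)) \<longlonglongrightarrow> h x \<and>
    (\<forall>k. vs k \<in> frechet_subdiff h (xs k)) \<and> vs \<longlonglongrightarrow> v"
    unfolding limiting_subdiff_def by auto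
  then show ?thesis using that by metis
qed

lemma limiting_subdiffI:
  assumes "\<bar>h x\<bar> \<noteq> \<infinity>" "xs \<longlonglongrightarrow> x" "(\<lambda>k. h (xs k)) \<longlonglongrightarrow> h x"
    "\<And>k. vs k \<in> frechet_subdiff h (xs k)" "vs \<longlonglongrightarrow> v"
  shows "v \<in> limiting_subdiff h x"
  unfolding limiting_subdiff_def mem_Collect_eq
  apply (intro conjI)
   apply (rule assms(1))
  apply (rule exI[of _ xs])
  apply (rule exI[of _ vs])
  using assms by auto

lemma limiting_prod:
  fixes \<phi> :: "'a::real_inner \<Rightarrow> ereal"
  assumes p: "p > 1" and g: "\<gamma> > 0"
    and ab: "(a, b) \<in> limiting_subdiff (\<lambda>(x, y). \<phi> y + ereal (norm (x - y) powr p / (p * \<gamma>))) (x, y)"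
  shows "a = Wf p \<gamma> (x - y) \<and> b + Wf p \<gamma> (x - y) \<in> limiting_subdiff \<phi> y"
proof -
  define \<Phi> where "\<Phi> = (\<lambda>(x, y). \<phi> y + ereal (norm (x - y) powr p / (p * \<gamma>)))"
  define N where "N = (\<lambda>z::'a. norm z powr p / (p * \<gamma>))"
  have PhiN: "\<Phi> (u, v) = \<phi> v + ereal (N (u - v))" for u v by (simp add: \<Phi>_def N_def)
  have ab': "(a, b) \<in> limiting_subdiff \<Phi> (x, y)" unfolding \<Phi>_def by (rule ab)
  from ab' obtain zs vs where fin: "\<bar>\<Phi> (x, y)\<bar> \<noteq> \<infinity>" and zs: "zs \<longlonglongrightarrow> (x, y)"
    and Pz: "(\<lambda>k. \<Phi> (zs k)) \<longlonglongrightarrow> \<Phi> (x, y)"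
    and vs': "\<forall>k. vs k \<in> frechet_subdiff \<Phi> (zs k)" and vl: "vs \<longlonglongrightarrow> (a, b)"
    using limiting_subdiffE[OF ab'] by metis
  have vs: "vs k \<in> frechet_subdiff \<Phi> (zs k)" for k using vs' by blast
  define X where "X k = fst (zs k)" for k
  define Y where "Y k = snd (zs k)" for k
  define A where "A k = fst (vs k)" for k
  define B where "B k = snd (vs k)" for k
  have zsXY: "zs k = (X k, Y k)" for k by (simp add: X_def Y_def)
  have vsAB: "vs k = (A k, B k)" for k by (simp add: A_def B_def)
  have X: "X \<longlonglongrightarrow> x" and Y: "Y \<longlonglongrightarrow> y"
    using tendsto_fst[OF zs] tendsto_snd[OF zs] by (simp_all add: X_def[abs_def] Y_def[abs_def])
  have Al: "A \<longlonglongrightarrow> a" and Bl: "B \<longlonglongrightarrow> b"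
    using tendsto_fst[OF vl] tendsto_snd[OF vl] by (simp_all add: A_def[abs_def] B_def[abs_def])
  have fk: "A k = Wf p \<gamma> (X k - Y k) \<and> B k + Wf p \<gamma> (X k - Y k) \<in> frechet_subdiff \<phi> (Y k)" for k
    using frechet_prod[OF p g, of "A k" "B k" \<phi> "X k" "Y k"] vs[of k] by (simp add: zsXY vsAB \<Phi>_def)
  have XY: "(\<lambda>k. X k - Y k) \<longlonglongrightarrow> x - y" using X Y by (intro tendsto_intros)
  have "(\<lambda>k. Wf p \<gamma> (X k - Y k)) \<longlonglongrightarrow> Wf p \<gamma> (x - y)"
    by (rule isCont_tendsto_compose[OF Wf_cont[OF p g] XY])
  moreover have "A = (\<lambda>k. Wf p \<gamma> (X k - Y k))" using fk by auto
  ultimately have Wl: "A \<longlonglongrightarrow> Wf p \<gamma> (x - y)" by simp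
  have aeq: "a = Wf p \<gamma> (x - y)" using LIMSEQ_unique[OF Al Wl] .
  have Nl: "(\<lambda>k. N (X k - Y k)) \<longlonglongrightarrow> N (x - y)"
    unfolding N_def by (rule isCont_tendsto_compose[OF N_cont[OF p g] XY])
  have finY: "\<bar>\<phi> (Y k)\<bar> \<noteq> \<infinity>" for k
  proof -
    have "\<bar>\<Phi> (zs k)\<bar> \<noteq> \<infinity>" using vs[of k] by (simp add: frechet_subdiff_def)
    then show ?thesis by (cases "\<phi> (Y k)") (auto simp: zsXY PhiN)
  qed
  have finy: "\<bar>\<phi> y\<bar> \<noteq> \<infinity>" using fin by (cases "\<phi> y") (auto simp: PhiN)
  have "(\<lambda>k. \<Phi> (zs k) + ereal (- N (X k - Y k))) \<longlonglongrightarrow> \<Phi> (x, y) + ereal (- N (x - y))"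
    using fin Pz Nl by (intro tendsto_add_ereal_general tendsto_intros) auto
  moreover have "\<Phi> (zs k) + ereal (- N (X k - Y k)) = \<phi> (Y k)" for k
    using ereal_cancel_fin[OF finY[of k]] by (simp add: zsXY PhiN)
  moreover have "\<Phi> (x, y) + ereal (- N (x - y)) = \<phi> y"
    using ereal_cancel_fin[OF finy] by (simp add: PhiN)
  ultimately have phil: "(\<lambda>k. \<phi> (Y k)) \<longlonglongrightarrow> \<phi> y" by simp
  have "(\<lambda>k. B k + A k) \<longlonglongrightarrow> b + Wf p \<gamma> (x - y)" using Bl Wl by (intro tendsto_intros)
  then have "b + Wf p \<gamma> (x - y) \<in> limiting_subdiff \<phi> y"
    using finy Y phil fk by (intro limiting_subdiffI[where xs = Y]) auto
  then show ?thesis using aeq by simp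
qed




lemma powr_sum_le:
  fixes u v \<theta> :: real
  assumes "u \<ge> 0" "v \<ge> 0" "0 < \<theta>" "\<theta> < 1"
  shows "(u + v) powr \<theta> \<le> 2 * (u powr \<theta> + v powr \<theta>)"
proof -
  have "(u + v) powr \<theta> \<le> (2 * max u v) powr \<theta>"
    using assms by (intro powr_mono2) auto
  also have "\<dots> = 2 powr \<theta> * max u v powr \<theta>"
    using assms by (simp add: powr_mult)
  also have "\<dots> \<le> 2 * max u v powr \<theta>"
  proof -
    have "2 powr \<theta> \<le> 2 powr 1" using assms by (intro powr_mono) auto
    then show ?thesis by (intro mult_right_mono) auto
  qed
  also have "max u v powr \<theta> \<le> u powr \<theta> + v powr \<theta>"
    by (cases "u \<le> v") (auto simp: max_def)
  finally show ?thesis by simp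
qed

lemma final_contra:
  fixes p \<gamma> \<theta> t L M s a C \<eta>0 :: real
  assumes p: "p > 1" and g: "\<gamma> > 0" and th: "(p - 1) / p \<le> \<theta>" "\<theta> < 1"
    and t: "t > 0" "t < 1 / L" and L: "L \<ge> 1"
    and M: "M \<le> 2 * t powr \<theta> / (L * (1 - \<theta>))"
    and s: "s \<ge> 0" "s powr (p - 1) / \<gamma> \<le> M"
    and teq: "t = \<bar>a + s powr p / (p * \<gamma>)\<bar>"
    and KL: "a \<noteq> 0 \<Longrightarrow> \<bar>a\<bar> < \<eta>0 \<Longrightarrow> \<bar>a\<bar> powr \<theta> \<le> C * M"
    and C: "C \<ge> 0"
    and L1: "L > 2 * \<gamma> / (1 - \<theta>)"
    and L2: "1 / L + 2 * \<gamma> / (L * (1 - \<theta>) * (p * \<gamma>)) \<le> \<eta>0"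
    and L3: "L * (1 - \<theta>) > 2 * (2 * (C + \<gamma> * (p * \<gamma>) powr (- \<theta>)))"
  shows False
proof -
  have th0: "\<theta> > 0"
  proof -
    have "(p - 1) / p > 0" using p by simp
    then show ?thesis using th by linarith
  qed
  have pth: "p - 1 \<le> p * \<theta>" using th(1) p by (simp add: field_simps)
  have "1 / L \<le> 1" using L by simp
  then have tle1: "t < 1" using t by linarith
  have tth: "t powr \<theta> \<le> 1" using t tle1 th0 by (simp add: powr_le1)
  define \<delta> where "\<delta> = 2 * \<gamma> / (L * (1 - \<theta>))"
  have Mle: "M \<le> 2 / (L * (1 - \<theta>))"
  proof -
    have "2 * t powr \<theta> / (L * (1 - \<theta>)) \<le> 2 / (L * (1 - \<theta>))"
      using tth L th by (intro divide_right_mono) auto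
    then show ?thesis using M by linarith
  qed
  have "0 \<le> s powr (p - 1) / \<gamma>" using g by simp
  then have M0: "M \<ge> 0" using s(2) by linarith
  have sp1: "s powr (p - 1) \<le> \<delta>"
  proof -
    have "s powr (p - 1) \<le> \<gamma> * M" using s(2) g by (simp add: field_simps)
    also have "\<dots> \<le> \<gamma> * (2 / (L * (1 - \<theta>)))" using Mle g by (intro mult_left_mono) auto
    finally show ?thesis by (simp add: \<delta>_def mult.commute)
  qed
  have d1: "\<delta> < 1" using L1 L th g by (simp add: \<delta>_def field_simps)
  have s1: "s \<le> 1"
  proof (rule ccontr)
    assume "\<not> s \<le> 1"
    then have "1 < s" by simp
    then have "1 powr (p - 1) < s powr (p - 1)" using p by (intro powr_less_mono2) auto
    then have "1 < s powr (p - 1)" by simp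
    then show False using sp1 d1 by linarith
  qed
  have sps: "s powr p \<le> s powr (p - 1)"
    using s(1) s1 p by (intro powr_mono') auto
  define b where "b = s powr p / (p * \<gamma>)"
  have b0: "b \<ge> 0" using p g by (simp add: b_def)
  have bl: "b \<le> \<delta> / (p * \<gamma>)"
    unfolding b_def using sps sp1 p g by (intro divide_right_mono) auto
  have tb: "t = \<bar>a + b\<bar>" using teq by (simp add: b_def)
  have ta: "t \<le> \<bar>a\<bar> + b" using tb b0 by (cases "a + b \<ge> 0"; cases "a \<ge> 0") auto
  have abnd: "\<bar>a\<bar> < \<eta>0"
  proof -
    have "\<bar>a\<bar> \<le> t + b" using tb b0 by (cases "a + b \<ge> 0"; cases "a \<ge> 0") auto
    also have "\<dots> < 1 / L + \<delta> / (p * \<gamma>)" using t bl by linarith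
    also have "\<dots> \<le> \<eta>0" using L2 by (simp add: \<delta>_def)
    finally show ?thesis .
  qed
  have aM: "\<bar>a\<bar> powr \<theta> \<le> C * M"
    using KL abnd C M0 by (cases "a = 0") auto
  have bM: "b powr \<theta> \<le> \<gamma> * (p * \<gamma>) powr (- \<theta>) * M"
  proof -
    have "b powr \<theta> = (s powr p) powr \<theta> * (p * \<gamma>) powr (- \<theta>)"
    proof -
      have "b powr \<theta> = (s powr p) powr \<theta> / (p * \<gamma>) powr \<theta>"
        unfolding b_def using p g by (intro powr_divide)
      then show ?thesis by (simp add: powr_minus divide_inverse)
    qed
    also have "(s powr p) powr \<theta> = s powr (p * \<theta>)" by (simp add: powr_powr)
    also have "s powr (p * \<theta>) \<le> s powr (p - 1)"
      using s(1) s1 pth by (intro powr_mono') auto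
    also have "s powr (p - 1) \<le> \<gamma> * M" using s(2) g by (simp add: field_simps)
    finally show ?thesis by (simp add: mult_right_mono mult_ac)
  qed
  define K where "K = 2 * (C + \<gamma> * (p * \<gamma>) powr (- \<theta>))"
  have "t powr \<theta> \<le> (\<bar>a\<bar> + b) powr \<theta>" using ta t th0 by (intro powr_mono2) auto
  also have "\<dots> \<le> 2 * (\<bar>a\<bar> powr \<theta> + b powr \<theta>)" using b0 th0 th by (intro powr_sum_le) auto
  also have "\<dots> \<le> K * M" using aM bM by (simp add: K_def algebra_simps)
  also have "\<dots> \<le> K * (2 * t powr \<theta> / (L * (1 - \<theta>)))"
    using M C g p by (intro mult_left_mono) (auto simp: K_def)
  finally have "t powr \<theta> \<le> (2 * K / (L * (1 - \<theta>))) * t powr \<theta>" by (simp add: mult_ac)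
  moreover have "2 * K / (L * (1 - \<theta>)) < 1" using L3 L th by (simp add: K_def field_simps)
  moreover have "t powr \<theta> > 0" using t by simp
  ultimately have "1 * t powr \<theta> \<le> (2 * K / (L * (1 - \<theta>))) * t powr \<theta>"
    "(2 * K / (L * (1 - \<theta>))) < 1" by simp_all
  then show False using \<open>t powr \<theta> > 0\<close> by (simp only: mult_le_cancel_right) auto
qed




lemma KL_bound:
  fixes h :: "'a::real_inner \<Rightarrow> ereal"
  assumes KL: "KL_with h xb (\<lambda>t. c * t powr (1 - \<theta>))" and c: "c > 0"
    and th: "0 < \<theta>" "\<theta> < 1" and xb: "\<bar>h xb\<bar> \<noteq> \<infinity>"
  obtains r \<eta>0 where "r > 0" "\<eta>0 > 0"
    "\<And>y. y \<in> cball xb r \<Longrightarrow> y \<in> dom_subdiff h \<Longrightarrow> 0 < \<bar>h y - h xb\<bar> \<Longrightarrow> \<bar>h y - h xb\<bar> < ereal \<eta>0 \<Longrightarrow>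
       (real_of_ereal \<bar>h y - h xb\<bar>) powr \<theta> \<le> c * (1 - \<theta>) * infdist 0 (limiting_subdiff h y)"
proof -
  from KL obtain r \<eta> where r: "r > 0" and eta: "\<eta> > 0" and
    H: "\<And>x. x \<in> cball xb r \<and> x \<in> dom_subdiff h \<and> 0 < \<bar>h x - h xb\<bar> \<and> \<bar>h x - h xb\<bar> < \<eta> \<Longrightarrow>
        deriv (\<lambda>t. c * t powr (1 - \<theta>)) (real_of_ereal \<bar>h x - h xb\<bar>) * infdist 0 (limiting_subdiff h x) \<ge> 1"
    unfolding KL_with_def by blast
  obtain e where e: "0 < ereal e" "ereal e < \<eta>" using ereal_dense2[OF eta] by blast
  show ?thesis
  proof (rule that[OF r, of e])
    show "e > 0" using e by simp
    fix y assume y: "y \<in> cball xb r" "y \<in> dom_subdiff h" "0 < \<bar>h y - h xb\<bar>" "\<bar>h y - h xb\<bar> < ereal e"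
    have "\<bar>h y\<bar> \<noteq> \<infinity>" using dom_finite[OF y(2)] .
    then obtain t where teq: "\<bar>h y - h xb\<bar> = ereal t" using xb
      by (cases "h y"; cases "h xb") auto
    have t: "t > 0" using y(3) teq by simp
    have "\<bar>h y - h xb\<bar> < \<eta>" using y(4) e(2) by (rule less_trans)
    then have "deriv (\<lambda>t. c * t powr (1 - \<theta>)) t * infdist 0 (limiting_subdiff h y) \<ge> 1"
      using H[of y] y teq by simp
    then have "c * ((1 - \<theta>) * t powr (- \<theta>)) * infdist 0 (limiting_subdiff h y) \<ge> 1"
      using psi_deriv_eq[OF t] by simp
    then have "t powr \<theta> * 1 \<le> t powr \<theta> * (c * ((1 - \<theta>) * t powr (- \<theta>)) * infdist 0 (limiting_subdiff h y))"
      using t by (intro mult_left_mono) auto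
    also have "\<dots> = c * (1 - \<theta>) * infdist 0 (limiting_subdiff h y) * (t powr \<theta> * t powr (- \<theta>))"
      by (simp add: mult_ac)
    also have "t powr \<theta> * t powr (- \<theta>) = 1" using t by (simp add: powr_add[symmetric])
    finally show "(real_of_ereal \<bar>h y - h xb\<bar>) powr \<theta> \<le> c * (1 - \<theta>) * infdist 0 (limiting_subdiff h y)"
      using teq by simp
  qed
qed


lemma partA:
  fixes \<phi> :: "'a::real_inner \<Rightarrow> ereal"
  assumes p: "p > 1" and g: "\<gamma> > 0" and th: "(p - 1) / p \<le> \<theta>" "\<theta> < 1"
    and KL\<phi>: "KL_exponent \<phi> \<theta>"
  shows "KL_exponent (\<lambda>(x, y). \<phi> y + ereal (norm (x - y) powr p / (p * \<gamma>))) \<theta>"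
proof -
  define \<Phi> where "\<Phi> = (\<lambda>(x, y). \<phi> y + ereal (norm (x - y) powr p / (p * \<gamma>)))"
  have th0: "\<theta> > 0"
  proof -
    have "(p - 1) / p > 0" using p by simp
    then show ?thesis using th by linarith
  qed
  have "KL_exponent_at \<Phi> zb \<theta>" if zb: "zb \<in> dom_subdiff \<Phi>" for zb
  proof (rule ccontr)
    assume nk: "\<not> KL_exponent_at \<Phi> zb \<theta>"
    obtain xs us where S: "\<forall>k::nat. xs k \<in> cball zb (1 / (real k + 1)) \<and> xs k \<in> dom_subdiff \<Phi> \<and>
     0 < \<bar>\<Phi> (xs k) - \<Phi> zb\<bar> \<and> \<bar>\<Phi> (xs k) - \<Phi> zb\<bar> < ereal (1 / (real k + 1)) \<and>
     us k \<in> limiting_subdiff \<Phi> (xs k) \<and>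
     norm (us k) \<le> 2 * (real_of_ereal \<bar>\<Phi> (xs k) - \<Phi> zb\<bar>) powr \<theta> / ((real k + 1) * (1 - \<theta>))"
      using KL_fail_seq[OF th0 th(2) zb nk] by blast
    obtain xb yb where zbe: "zb = (xb, yb)" by (cases zb)
    have fzb: "\<bar>\<Phi> zb\<bar> \<noteq> \<infinity>" using dom_finite[OF zb] .
    obtain u0 where u0: "u0 \<in> limiting_subdiff \<Phi> zb" using zb by (auto simp: dom_subdiff_def)
    have "(fst u0, snd u0) \<in> limiting_subdiff \<Phi> (xb, yb)" using u0 zbe by simp
    then have "snd u0 + Wf p \<gamma> (xb - yb) \<in> limiting_subdiff \<phi> yb"
      using limiting_prod[OF p g] unfolding \<Phi>_def by blast
    then have ybd: "yb \<in> dom_subdiff \<phi>" by (auto simp: dom_subdiff_def)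
    then have "KL_exponent_at \<phi> yb \<theta>" using KL\<phi> by (simp add: KL_exponent_def)
    then obtain c where c: "c > 0" and KLc: "KL_with \<phi> yb (\<lambda>t. c * t powr (1 - \<theta>))"
      by (auto simp: KL_exponent_at_def)
    have fyb: "\<bar>\<phi> yb\<bar> \<noteq> \<infinity>" using dom_finite[OF ybd] .
    obtain r \<eta>0 where r: "r > 0" and eta0: "\<eta>0 > 0" and KB:
      "\<And>y. y \<in> cball yb r \<Longrightarrow> y \<in> dom_subdiff \<phi> \<Longrightarrow> 0 < \<bar>\<phi> y - \<phi> yb\<bar> \<Longrightarrow> \<bar>\<phi> y - \<phi> yb\<bar> < ereal \<eta>0 \<Longrightarrow>
       (real_of_ereal \<bar>\<phi> y - \<phi> yb\<bar>) powr \<theta> \<le> c * (1 - \<theta>) * infdist 0 (limiting_subdiff \<phi> y)"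
      using KL_bound[OF KLc c th0 th(2) fyb] by metis
    define C where "C = 2 * (c * (1 - \<theta>))"
    define K where "K = 2 * (C + \<gamma> * (p * \<gamma>) powr (- \<theta>))"
    define d where "d = norm (xb - yb)"
    have C0: "C \<ge> 0" using c th by (simp add: C_def)
    have K0: "K \<ge> 0" using C0 g by (simp add: K_def)
    define Q where "Q = max (max (max 1 (1 / r)) (max (2 * \<gamma> / (1 - \<theta>) + 1) ((1 + 2 / ((1 - \<theta>) * p)) / \<eta>0)))
       (max (2 * K / (1 - \<theta>) + 1) (if d > 0 then max (4 / d) (2 * \<gamma> / ((1 - \<theta>) * (d / 2) powr (p - 1)) + 1) else 0))"
    obtain k :: nat where kQ: "Q \<le> real k" using real_arch_simple by blast
    define L where "L = real k + 1"
    have LQ: "Q < L" using kQ by (simp add: L_def)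
    have L1: "L \<ge> 1" using LQ by (simp add: Q_def)
    have Lpos: "L > 0" using L1 by simp
    have Lr: "1 / L \<le> r"
    proof -
      have "1 / r < L" using LQ by (simp add: Q_def)
      then show ?thesis using r Lpos by (simp add: field_simps)
    qed
    have LL1: "L > 2 * \<gamma> / (1 - \<theta>)" using LQ by (simp add: Q_def)
    have LL2: "1 / L + 2 * \<gamma> / (L * (1 - \<theta>) * (p * \<gamma>)) \<le> \<eta>0"
    proof -
      have "(1 + 2 / ((1 - \<theta>) * p)) / \<eta>0 < L" using LQ by (simp add: Q_def)
      then have "1 + 2 / ((1 - \<theta>) * p) \<le> L * \<eta>0" using eta0 by (simp add: field_simps)
      moreover have "1 / L + 2 * \<gamma> / (L * (1 - \<theta>) * (p * \<gamma>)) = (1 + 2 / ((1 - \<theta>) * p)) / L"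
        using g p th Lpos by (simp add: field_simps)
      ultimately show ?thesis using Lpos by (simp add: field_simps)
    qed
    have LL3: "L * (1 - \<theta>) > 2 * K"
    proof -
      have "2 * K / (1 - \<theta>) < L" using LQ by (simp add: Q_def)
      then show ?thesis using th by (simp add: field_simps)
    qed
    define X where "X = fst (xs k)"
    define Y where "Y = snd (xs k)"
    define A where "A = fst (us k)"
    define B where "B = snd (us k)"
    have Sk: "xs k \<in> cball zb (1 / L)" "xs k \<in> dom_subdiff \<Phi>"
     "0 < \<bar>\<Phi> (xs k) - \<Phi> zb\<bar>" "\<bar>\<Phi> (xs k) - \<Phi> zb\<bar> < ereal (1 / L)"
     "us k \<in> limiting_subdiff \<Phi> (xs k)"
     "norm (us k) \<le> 2 * (real_of_ereal \<bar>\<Phi> (xs k) - \<Phi> zb\<bar>) powr \<theta> / (L * (1 - \<theta>))"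
      using S unfolding L_def by blast+
    have xsk: "xs k = (X, Y)" by (simp add: X_def Y_def)
    have usk: "us k = (A, B)" by (simp add: A_def B_def)
    have "(A, B) \<in> limiting_subdiff \<Phi> (X, Y)" using Sk(5) xsk usk by simp
    then have lp: "A = Wf p \<gamma> (X - Y)" "B + Wf p \<gamma> (X - Y) \<in> limiting_subdiff \<phi> Y"
      using limiting_prod[OF p g] unfolding \<Phi>_def by blast+
    have Yd: "Y \<in> dom_subdiff \<phi>" using lp(2) by (auto simp: dom_subdiff_def)
    obtain f1 where f1: "\<phi> Y = ereal f1" using dom_finite[OF Yd] by (cases "\<phi> Y") auto
    obtain f0 where f0: "\<phi> yb = ereal f0" using fyb by (cases "\<phi> yb") auto
    define s where "s = norm (X - Y)"
    define t where "t = \<bar>(f1 - f0) + s powr p / (p * \<gamma>) - norm (xb - yb) powr p / (p * \<gamma>)\<bar>"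
    have Pdiff: "\<bar>\<Phi> (xs k) - \<Phi> zb\<bar> = ereal t"
      by (simp add: xsk zbe \<Phi>_def f1 f0 t_def s_def algebra_simps)
    have t: "t > 0" "t < 1 / L" using Sk(3,4) Pdiff by simp_all
    define M where "M = norm (us k)"
    have M: "M \<le> 2 * t powr \<theta> / (L * (1 - \<theta>))" using Sk(6) Pdiff by (simp add: M_def)
    have nA: "s powr (p - 1) / \<gamma> \<le> M"
    proof -
      have "norm A \<le> M" unfolding M_def usk by (rule norm_fst_le)
      then show ?thesis using norm_Wf[OF g, of p "X - Y"] lp(1) by (simp add: s_def)
    qed
    have dist_k: "norm (xs k - zb) \<le> 1 / L" using Sk(1) by (simp add: dist_norm norm_minus_commute)
    have dX: "norm (X - xb) \<le> 1 / L" using dist_k norm_fst_le[of "X - xb" "Y - yb"] by (simp add: xsk zbe)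
    have dY: "norm (Y - yb) \<le> 1 / L" using dist_k norm_snd_le[of "Y - yb" "X - xb"] by (simp add: xsk zbe)
    have tth: "t powr \<theta> \<le> 1"
    proof -
      have "1 / L \<le> 1" using L1 by simp
      then show ?thesis using t th0 by (intro powr_le1) auto
    qed
    show False
    proof (cases "d > 0")
      case True
      have "4 / d < L" using LQ True by (simp add: Q_def)
      then have "2 / L \<le> d / 2" using True Lpos by (simp add: field_simps)
      moreover have "d \<le> s + norm (X - xb) + norm (Y - yb)"
      proof -
        have "xb - yb = (X - Y) - (X - xb) + (Y - yb)" by (simp add: algebra_simps)
        then have "d = norm ((X - Y) - (X - xb) + (Y - yb))" by (simp add: d_def)
        also have "\<dots> \<le> norm ((X - Y) - (X - xb)) + norm (Y - yb)" by (rule norm_triangle_ineq)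
        also have "norm ((X - Y) - (X - xb)) \<le> s + norm (X - xb)" unfolding s_def by (rule norm_triangle_ineq4)
        finally show ?thesis by simp
      qed
      ultimately have sd: "d / 2 \<le> s" using dX dY by linarith
      have "(d / 2) powr (p - 1) \<le> s powr (p - 1)" using sd True p by (intro powr_mono2) auto
      also have "\<dots> \<le> \<gamma> * M" using nA g by (simp add: field_simps)
      also have "\<dots> \<le> \<gamma> * (2 / (L * (1 - \<theta>)))"
      proof -
        have "2 * t powr \<theta> / (L * (1 - \<theta>)) \<le> 2 / (L * (1 - \<theta>))"
          using tth Lpos th by (intro divide_right_mono) auto
        then show ?thesis using M g by (intro mult_left_mono) auto
      qed
      finally have "(d / 2) powr (p - 1) \<le> 2 * \<gamma> / (L * (1 - \<theta>))" by (simp add: mult.commute)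
      moreover have "2 * \<gamma> / ((1 - \<theta>) * (d / 2) powr (p - 1)) < L"
        using LQ True by (simp add: Q_def)
      then have "2 * \<gamma> / (L * (1 - \<theta>)) < (d / 2) powr (p - 1)"
        using True Lpos th by (simp add: field_simps)
      ultimately show False by linarith
    next
      case False
      then have xy: "xb = yb" by (simp add: d_def)
      have teq: "t = \<bar>(f1 - f0) + s powr p / (p * \<gamma>)\<bar>" using xy by (simp add: t_def)
      show False
      proof (rule final_contra[OF p g th t L1 M _ nA teq _ C0 LL1 LL2 LL3[unfolded K_def]])
        show "s \<ge> 0" by (simp add: s_def)
        assume a0: "f1 - f0 \<noteq> 0" and aeta: "\<bar>f1 - f0\<bar> < \<eta>0"
        have "\<bar>\<phi> Y - \<phi> yb\<bar> = ereal \<bar>f1 - f0\<bar>" by (simp add: f1 f0)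
        then have "\<bar>f1 - f0\<bar> powr \<theta> \<le> c * (1 - \<theta>) * infdist 0 (limiting_subdiff \<phi> Y)"
          using KB[of Y] Yd a0 aeta dY Lr by (simp add: dist_norm norm_minus_commute)
        also have "infdist 0 (limiting_subdiff \<phi> Y) \<le> norm (B + Wf p \<gamma> (X - Y))"
          using infdist_le[OF lp(2), of 0] by simp
        also have "\<dots> \<le> norm B + norm A" using lp(1) norm_triangle_ineq by simp
        also have "\<dots> \<le> 2 * M"
          using norm_fst_le[of A B] norm_snd_le[of B A] by (simp add: M_def usk)
        finally show "\<bar>f1 - f0\<bar> powr \<theta> \<le> C * M" 
          using c th by (simp add: C_def mult_ac mult_left_mono)
      qed
    qed
  qed
  then show ?thesis unfolding KL_exponent_def \<Phi>_def by blast
qed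




lemma lsc_seq_le:
  fixes \<phi> :: "'a::topological_space \<Rightarrow> ereal"
  assumes lsc: "lsc_fun \<phi>" and ys: "ys \<longlonglongrightarrow> yh"
    and Fl: "(\<lambda>j. \<phi> (ys j) + ereal (G j)) \<longlonglongrightarrow> Lm" and Gl: "G \<longlonglongrightarrow> g"
  shows "\<phi> yh + ereal g \<le> Lm"
proof (rule ccontr)
  assume "\<not> \<phi> yh + ereal g \<le> Lm"
  then have "Lm < \<phi> yh + ereal g" by simp
  then obtain c1 where c1: "Lm < ereal c1" "ereal c1 < \<phi> yh + ereal g" using ereal_dense2 by blast
  then obtain c2 where c2: "ereal c1 < ereal c2" "ereal c2 < \<phi> yh + ereal g" using ereal_dense2 by blast
  have lt: "ereal (c2 - g) < \<phi> yh" using c2(2) by (cases "\<phi> yh") auto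
  then have "ereal (c2 - g) < Liminf (at yh) \<phi>" using lsc unfolding lsc_fun_def
    using less_le_trans by blast
  then have "\<forall>\<^sub>F z in at yh. ereal (c2 - g) < \<phi> z" by (rule less_LiminfD)
  then have "\<forall>\<^sub>F z in nhds yh. ereal (c2 - g) < \<phi> z"
    using lt by (auto simp: eventually_at_filter elim: eventually_mono)
  then have E1: "\<forall>\<^sub>F j in sequentially. ereal (c2 - g) < \<phi> (ys j)"
    using ys by (auto simp: tendsto_def filterlim_iff dest: filterlim_iff[THEN iffD1])
  have c12: "c1 < c2" using c2(1) by simp
  have E2: "\<forall>\<^sub>F j in sequentially. G j > g - (c2 - c1)"
    using Gl c12 by (intro order_tendstoD(1)) auto
  have E3: "\<forall>\<^sub>F j in sequentially. \<phi> (ys j) + ereal (G j) < ereal c1"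
    using Fl c1(1) by (rule order_tendstoD(2))
  have "\<forall>\<^sub>F j in sequentially. False"
    using E1 E2 E3
  proof eventually_elim
    case (elim j)
    show False
    proof (cases "\<phi> (ys j)")
      case (real f)
      then show False using elim by simp
    next
      case PInf then show False using elim by simp
    next
      case MInf then show False using elim by simp
    qed
  qed
  then show False by simp
qed

lemma coercive_bound:
  fixes \<phi> :: "'a::real_normed_vector \<Rightarrow> ereal"
  assumes p: "p > 1" and g: "\<gamma> > 0" and g1: "\<gamma> < \<gamma>1"
    and LB: "\<And>y. ereal m \<le> \<phi> y + ereal (norm (x0 - y) powr p / (p * \<gamma>1))"
  shows "\<exists>S. \<forall>x y. norm (x - x0) \<le> R \<longrightarrow> \<phi> y + ereal (norm (x - y) powr p / (p * \<gamma>)) \<le> ereal M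
     \<longrightarrow> norm (x - y) \<le> S"
proof -
  define q where "q = \<gamma>1 / \<gamma>"
  have q1: "q > 1" using g g1 by (simp add: q_def)
  have qp: "q powr (1 / p) > 1" using q1 p by (intro gr_one_powr) auto
  define \<delta> where "\<delta> = (q powr (1 / p) - 1) / 2"
  have d0: "\<delta> > 0" using qp by (simp add: \<delta>_def)
  have "1 + \<delta> < q powr (1 / p)" using qp by (simp add: \<delta>_def field_simps)
  then have "(1 + \<delta>) powr p < (q powr (1 / p)) powr p"
    using d0 p by (intro powr_less_mono2) auto
  also have "\<dots> = q" using p q1 by (simp add: powr_powr)
  finally have dq: "(1 + \<delta>) powr p < q" .
  define \<kappa> where "\<kappa> = (1 / \<gamma> - (1 + \<delta>) powr p / \<gamma>1) / p"
  have k0: "\<kappa> > 0"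
  proof -
    have "(1 + \<delta>) powr p / \<gamma>1 < q / \<gamma>1" using dq g g1 by (intro divide_strict_right_mono) auto
    also have "q / \<gamma>1 = 1 / \<gamma>" using g g1 by (simp add: q_def)
    finally show ?thesis using p by (simp add: \<kappa>_def)
  qed
  define S where "S = max (max 1 (R / \<delta>)) ((M - m) / \<kappa>)"
  show ?thesis
  proof (intro exI[of _ S] allI impI)
    fix x y
    assume xR: "norm (x - x0) \<le> R" and le: "\<phi> y + ereal (norm (x - y) powr p / (p * \<gamma>)) \<le> ereal M"
    show "norm (x - y) \<le> S"
    proof (rule ccontr)
      assume "\<not> norm (x - y) \<le> S"
      then have sS: "norm (x - y) > S" by simp
      define s where "s = norm (x - y)"
      have s1: "s > 1" and sR: "s > R / \<delta>" and sM: "s > (M - m) / \<kappa>" using sS by (auto simp: S_def s_def)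
      have "R < \<delta> * s" using sR d0 by (simp add: field_simps)
      have n0: "norm (x0 - y) \<le> (1 + \<delta>) * s"
      proof -
        have "norm (x0 - y) \<le> norm (x0 - x) + norm (x - y)" using norm_triangle_ineq[of "x0 - x" "x - y"] by simp
        also have "norm (x0 - x) \<le> R" using xR by (simp add: norm_minus_commute)
        finally show ?thesis using \<open>R < \<delta> * s\<close> by (simp add: s_def algebra_simps)
      qed
      have np: "norm (x0 - y) powr p \<le> (1 + \<delta>) powr p * s powr p"
      proof -
        have "norm (x0 - y) powr p \<le> ((1 + \<delta>) * s) powr p" using n0 p by (intro powr_mono2) auto
        also have "\<dots> = (1 + \<delta>) powr p * s powr p" using d0 s1 by (simp add: powr_mult)
        finally show ?thesis .
      qed
      have fin: "\<phi> y \<noteq> \<infinity>" using le by auto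
      have fin2: "\<phi> y \<noteq> -\<infinity>" using LB[of y] by auto
      obtain f where f: "\<phi> y = ereal f" using fin fin2 by (cases "\<phi> y") auto
      have A: "m \<le> f + norm (x0 - y) powr p / (p * \<gamma>1)" using LB[of y] f by simp
      have B: "f + s powr p / (p * \<gamma>) \<le> M" using le f by (simp add: s_def)
      have C: "norm (x0 - y) powr p / (p * \<gamma>1) \<le> (1 + \<delta>) powr p * s powr p / (p * \<gamma>1)"
        using np p g g1 by (intro divide_right_mono) auto
      have "\<kappa> * s powr p = s powr p / (p * \<gamma>) - (1 + \<delta>) powr p * s powr p / (p * \<gamma>1)"
        using p g g1 by (simp add: \<kappa>_def field_simps)
      then have "\<kappa> * s powr p \<le> M - m" using A B C by linarith
      moreover have "\<kappa> * s \<le> \<kappa> * s powr p"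
      proof -
        have "s powr 1 \<le> s powr p" using s1 p by (intro powr_mono) auto
        then show ?thesis using s1 k0 by simp
      qed
      ultimately have "\<kappa> * s \<le> M - m" by linarith
      then have "s \<le> (M - m) / \<kappa>" using k0 by (simp add: pos_le_divide_eq mult.commute)
      then show False using sM by simp
    qed
  qed
qed


lemma prox_exists:
  fixes \<phi> :: "'a::euclidean_space \<Rightarrow> ereal"
  assumes p: "p > 1" and g: "\<gamma> > 0" and g1: "\<gamma> < \<gamma>1"
    and LB: "\<And>y. ereal m \<le> \<phi> y + ereal (norm (x0 - y) powr p / (p * \<gamma>1))"
    and nm: "\<And>y. \<phi> y \<noteq> -\<infinity>" and y0: "\<phi> y0 \<noteq> \<infinity>" and lsc: "lsc_fun \<phi>"
  shows "\<exists>y. \<phi> y + ereal (norm (x - y) powr p / (p * \<gamma>)) = hmoreau \<phi> p \<gamma> x \<and> \<bar>hmoreau \<phi> p \<gamma> x\<bar> \<noteq> \<infinity>"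
proof -
  define f where "f = (\<lambda>y. \<phi> y + ereal (norm (x - y) powr p / (p * \<gamma>)))"
  have ex: "hmoreau \<phi> p \<gamma> x = Inf (range f)" by (simp add: hmoreau_def f_def)
  obtain F where F: "decseq F" "range F \<subseteq> range f" "Inf (range f) = (INF i. F i)"
    using Inf_countable_INF[of "range f"] by auto
  have Fl: "F \<longlonglongrightarrow> hmoreau \<phi> p \<gamma> x" using LIMSEQ_INF[OF F(1)] F(3) ex by simp
  have "\<forall>i. \<exists>y. F i = f y" using F(2) by auto
  then obtain ys where ys: "\<And>i. F i = f (ys i)" by metis
  have "hmoreau \<phi> p \<gamma> x \<le> f y0" unfolding ex by (rule Inf_lower) simp
  moreover have "f y0 < \<infinity>" using y0 by (simp add: f_def)
  ultimately have "hmoreau \<phi> p \<gamma> x < \<infinity>" using le_less_trans by blast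
  then obtain Mx where Mx: "hmoreau \<phi> p \<gamma> x < ereal Mx" using ereal_dense2 by blast
  have "\<forall>\<^sub>F i in sequentially. F i < ereal Mx" using Fl Mx by (rule order_tendstoD(2))
  then obtain i0 where i0: "\<And>i. i \<ge> i0 \<Longrightarrow> F i < ereal Mx" by (auto simp: eventually_sequentially)
  obtain S where S: "\<And>x' y. norm (x' - x0) \<le> norm (x - x0) \<Longrightarrow>
      \<phi> y + ereal (norm (x' - y) powr p / (p * \<gamma>)) \<le> ereal Mx \<Longrightarrow> norm (x' - y) \<le> S"
    using coercive_bound[OF p g g1 LB, of "norm (x - x0)" Mx] by blast
  define z where "z j = ys (j + i0)" for j
  have zb: "norm (x - z j) \<le> S" for j
  proof -
    have "f (z j) < ereal Mx" using i0[of "j + i0"] ys[of "j + i0"] by (simp add: z_def)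
    then show ?thesis using S[of x "z j"] by (simp add: f_def)
  qed
  have "bounded (range z)"
  proof -
    have "norm (z j) \<le> norm x + S" for j
      using zb[of j] norm_triangle_ineq4[of x "z j"] by (smt (verit) norm_minus_commute norm_triangle_ineq2)
    then show ?thesis by (auto simp: bounded_iff)
  qed
  then obtain yh r where r: "strict_mono r" and zl: "(z \<circ> r) \<longlonglongrightarrow> yh"
    using bounded_imp_convergent_subsequence by blast
  have Fsub: "(\<lambda>j. F (r j + i0)) \<longlonglongrightarrow> hmoreau \<phi> p \<gamma> x"
    using LIMSEQ_subseq_LIMSEQ[OF LIMSEQ_ignore_initial_segment[OF Fl, of i0] r] by (simp add: o_def)
  have Gl: "(\<lambda>j. norm (x - (z \<circ> r) j) powr p / (p * \<gamma>)) \<longlonglongrightarrow> norm (x - yh) powr p / (p * \<gamma>)"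
  proof -
    have "(\<lambda>j. x - (z \<circ> r) j) \<longlonglongrightarrow> x - yh" using zl by (intro tendsto_intros)
    from isCont_tendsto_compose[OF N_cont[OF p g] this] show ?thesis .
  qed
  have "(\<lambda>j. \<phi> ((z \<circ> r) j) + ereal (norm (x - (z \<circ> r) j) powr p / (p * \<gamma>))) \<longlonglongrightarrow> hmoreau \<phi> p \<gamma> x"
    using Fsub by (simp add: ys f_def z_def o_def)
  from lsc_seq_le[OF lsc zl this Gl]
  have le: "f yh \<le> hmoreau \<phi> p \<gamma> x" by (simp add: f_def)
  have ge: "hmoreau \<phi> p \<gamma> x \<le> f yh" unfolding ex by (rule Inf_lower) simp
  have eq: "f yh = hmoreau \<phi> p \<gamma> x" using le ge by simp
  have "f yh \<noteq> -\<infinity>" using nm[of yh] by (simp add: f_def)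
  then have "\<bar>hmoreau \<phi> p \<gamma> x\<bar> \<noteq> \<infinity>" using eq Mx by auto
  then show ?thesis using eq by (auto simp: f_def)
qed


lemma env_le:
  "hmoreau \<phi> p \<gamma> x \<le> \<phi> y + ereal (norm (x - y) powr p / (p * \<gamma>))"
  unfolding hmoreau_def by (rule INF_lower) simp

lemma frechet_env:
  fixes \<phi> :: "'a::real_inner \<Rightarrow> ereal"
  assumes p: "p > 1" and g: "\<gamma> > 0"
    and v: "v \<in> frechet_subdiff (hmoreau \<phi> p \<gamma>) x"
    and y: "\<phi> y + ereal (norm (x - y) powr p / (p * \<gamma>)) = hmoreau \<phi> p \<gamma> x"
    and fin: "\<bar>hmoreau \<phi> p \<gamma> x\<bar> \<noteq> \<infinity>"
  shows "v = Wf p \<gamma> (x - y)"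
proof -
  obtain c where c: "\<phi> y = ereal c" using y fin by (cases "\<phi> y") auto
  show ?thesis
  proof (rule frechet_touch[OF v])
    show "((\<lambda>x'. c + norm (x' - y) powr p / (p * \<gamma>)) has_derivative (\<lambda>d. Wf p \<gamma> (x - y) \<bullet> d)) (at x)"
      using has_derivative_add[OF has_derivative_const N_deriv_x[OF p g, where x=x and y=y]] by simp
    show "\<forall>\<^sub>F x' in at x. hmoreau \<phi> p \<gamma> x' \<le> ereal (c + norm (x' - y) powr p / (p * \<gamma>))"
      using env_le[of \<phi> p \<gamma> _ y] c by (intro always_eventually) simp
    show "hmoreau \<phi> p \<gamma> x = ereal (c + norm (x - y) powr p / (p * \<gamma>))"
      using y c by simp
  qed
qed

lemma prox_frechet:
  fixes \<phi> :: "'a::real_inner \<Rightarrow> ereal"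
  assumes p: "p > 1" and g: "\<gamma> > 0"
    and y: "\<phi> y + ereal (norm (x - y) powr p / (p * \<gamma>)) = hmoreau \<phi> p \<gamma> x"
    and fin: "\<bar>hmoreau \<phi> p \<gamma> x\<bar> \<noteq> \<infinity>"
  shows "Wf p \<gamma> (x - y) \<in> frechet_subdiff \<phi> y"
proof -
  obtain c where c: "\<phi> y = ereal c" using y fin by (cases "\<phi> y") auto
  have "0 - (- Wf p \<gamma> (x - y)) \<in> frechet_subdiff \<phi> y"
  proof (rule frechet_shift[where G = "\<lambda>y'. norm (x - y') powr p / (p * \<gamma>)"])
    show "\<bar>\<phi> y\<bar> \<noteq> \<infinity>" using c by simp
    show "((\<lambda>y'. norm (x - y') powr p / (p * \<gamma>)) has_derivative (\<lambda>d. (- Wf p \<gamma> (x - y)) \<bullet> d)) (at y)"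
      by (rule N_deriv_y[OF p g])
    fix \<epsilon> :: real assume e: "\<epsilon> > 0"
    show "\<forall>\<^sub>F y' in at y. \<phi> y + ereal (norm (x - y) powr p / (p * \<gamma>) + 0 \<bullet> (y' - y) - \<epsilon> * norm (y' - y))
        \<le> \<phi> y' + ereal (norm (x - y') powr p / (p * \<gamma>))"
    proof (intro always_eventually allI)
      fix y'
      have "\<phi> y + ereal (norm (x - y) powr p / (p * \<gamma>) + 0 \<bullet> (y' - y) - \<epsilon> * norm (y' - y))
          \<le> \<phi> y + ereal (norm (x - y) powr p / (p * \<gamma>))"
        using e by (simp add: c)
      also have "\<dots> \<le> \<phi> y' + ereal (norm (x - y') powr p / (p * \<gamma>))"
        using y env_le[of \<phi> p \<gamma> x y'] by simp
      finally show "\<phi> y + ereal (norm (x - y) powr p / (p * \<gamma>) + 0 \<bullet> (y' - y) - \<epsilon> * norm (y' - y))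
          \<le> \<phi> y' + ereal (norm (x - y') powr p / (p * \<gamma>))" .
    qed
  qed
  then show ?thesis by simp
qed

lemma limiting_env:
  fixes \<phi> :: "'a::euclidean_space \<Rightarrow> ereal"
  assumes p: "p > 1" and g: "\<gamma> > 0" and g1: "\<gamma> < \<gamma>1"
    and LB: "\<And>y. ereal m \<le> \<phi> y + ereal (norm (x0 - y) powr p / (p * \<gamma>1))"
    and nm: "\<And>y. \<phi> y \<noteq> -\<infinity>" and y0: "\<phi> y0 \<noteq> \<infinity>" and lsc: "lsc_fun \<phi>"
    and u: "u \<in> limiting_subdiff (hmoreau \<phi> p \<gamma>) x"
  shows "\<exists>y. \<phi> y + ereal (norm (x - y) powr p / (p * \<gamma>)) = hmoreau \<phi> p \<gamma> x \<and> u = Wf p \<gamma> (x - y)"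
proof -
  let ?e = "hmoreau \<phi> p \<gamma>"
  obtain xs vs where fin: "\<bar>?e x\<bar> \<noteq> \<infinity>" and xs: "xs \<longlonglongrightarrow> x" and exs: "(\<lambda>k. ?e (xs k)) \<longlonglongrightarrow> ?e x"
    and vs: "\<forall>k. vs k \<in> frechet_subdiff ?e (xs k)" and vl: "vs \<longlonglongrightarrow> u"
    using limiting_subdiffE[OF u] by metis
  have "\<forall>k. \<exists>y. \<phi> y + ereal (norm (xs k - y) powr p / (p * \<gamma>)) = ?e (xs k) \<and> \<bar>?e (xs k)\<bar> \<noteq> \<infinity>"
    using prox_exists[OF p g g1 LB nm y0 lsc] by blast
  then obtain ys where ys: "\<And>k. \<phi> (ys k) + ereal (norm (xs k - ys k) powr p / (p * \<gamma>)) = ?e (xs k)"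
    and fk: "\<And>k. \<bar>?e (xs k)\<bar> \<noteq> \<infinity>" by metis
  have vk: "vs k = Wf p \<gamma> (xs k - ys k)" for k
    using frechet_env[OF p g _ ys fk] vs by blast
  have "?e x < \<infinity>" using fin by auto
  then obtain Mx where Mx: "?e x < ereal Mx" using ereal_dense2 by blast
  have "\<forall>\<^sub>F k in sequentially. ?e (xs k) < ereal Mx" using exs Mx by (rule order_tendstoD(2))
  then obtain k0 where k0: "\<And>k. k \<ge> k0 \<Longrightarrow> ?e (xs k) < ereal Mx" by (auto simp: eventually_sequentially)
  have "bounded (range xs)" using xs by (rule convergent_imp_bounded)
  then obtain Bx where Bx: "\<And>k. norm (xs k) \<le> Bx" by (auto simp: bounded_iff)
  obtain S where S: "\<And>x' y. norm (x' - x0) \<le> Bx + norm x0 \<Longrightarrow>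
      \<phi> y + ereal (norm (x' - y) powr p / (p * \<gamma>)) \<le> ereal Mx \<Longrightarrow> norm (x' - y) \<le> S"
    using coercive_bound[OF p g g1 LB, of "Bx + norm x0" Mx] by blast
  define z where "z j = ys (j + k0)" for j
  define w where "w j = xs (j + k0)" for j
  have zb: "norm (w j - z j) \<le> S" for j
  proof -
    have "norm (w j - x0) \<le> Bx + norm x0"
      using Bx[of "j + k0"] norm_triangle_ineq4[of "w j" x0] by (simp add: w_def)
    moreover have "\<phi> (z j) + ereal (norm (w j - z j) powr p / (p * \<gamma>)) \<le> ereal Mx"
      using ys[of "j + k0"] k0[of "j + k0"] by (simp add: z_def w_def)
    ultimately show ?thesis by (rule S)
  qed
  have "bounded (range z)"
  proof -
    have "norm (z j) \<le> Bx + S" for j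
    proof -
      have "norm (z j) \<le> norm (w j) + norm (w j - z j)"
        using norm_triangle_ineq4[of "w j" "w j - z j"] by simp
      then show ?thesis using zb[of j] Bx[of "j + k0"] by (simp add: w_def)
    qed
    then show ?thesis by (auto simp: bounded_iff)
  qed
  then obtain yh r where r: "strict_mono r" and zl: "(z \<circ> r) \<longlonglongrightarrow> yh"
    using bounded_imp_convergent_subsequence by blast
  have wl: "(w \<circ> r) \<longlonglongrightarrow> x"
    using LIMSEQ_subseq_LIMSEQ[OF LIMSEQ_ignore_initial_segment[OF xs, of k0] r] by (simp add: w_def o_def)
  have ewl: "(\<lambda>j. ?e ((w \<circ> r) j)) \<longlonglongrightarrow> ?e x"
    using LIMSEQ_subseq_LIMSEQ[OF LIMSEQ_ignore_initial_segment[OF exs, of k0] r] by (simp add: w_def o_def)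
  have vl': "(\<lambda>j. vs (r j + k0)) \<longlonglongrightarrow> u"
    using LIMSEQ_subseq_LIMSEQ[OF LIMSEQ_ignore_initial_segment[OF vl, of k0] r] by (simp add: o_def)
  have dl: "(\<lambda>j. (w \<circ> r) j - (z \<circ> r) j) \<longlonglongrightarrow> x - yh" using wl zl by (intro tendsto_intros)
  have Gl: "(\<lambda>j. norm ((w \<circ> r) j - (z \<circ> r) j) powr p / (p * \<gamma>)) \<longlonglongrightarrow> norm (x - yh) powr p / (p * \<gamma>)"
    using isCont_tendsto_compose[OF N_cont[OF p g] dl] .
  have "(\<lambda>j. \<phi> ((z \<circ> r) j) + ereal (norm ((w \<circ> r) j - (z \<circ> r) j) powr p / (p * \<gamma>))) \<longlonglongrightarrow> ?e x"
    using ewl by (simp add: ys z_def w_def o_def)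
  from lsc_seq_le[OF lsc zl this Gl]
  have le: "\<phi> yh + ereal (norm (x - yh) powr p / (p * \<gamma>)) \<le> ?e x" .
  have eq: "\<phi> yh + ereal (norm (x - yh) powr p / (p * \<gamma>)) = ?e x" using le env_le[of \<phi> p \<gamma> x yh] by simp
  have "(\<lambda>j. Wf p \<gamma> ((w \<circ> r) j - (z \<circ> r) j)) \<longlonglongrightarrow> Wf p \<gamma> (x - yh)"
    using isCont_tendsto_compose[OF Wf_cont[OF p g] dl] .
  moreover have "(\<lambda>j. Wf p \<gamma> ((w \<circ> r) j - (z \<circ> r) j)) = (\<lambda>j. vs (r j + k0))"
    by (simp add: vk w_def z_def o_def)
  ultimately have "u = Wf p \<gamma> (x - yh)" using vl' LIMSEQ_unique by metis
  then show ?thesis using eq by blast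
qed




lemma partB:
  fixes \<phi> :: "'a::euclidean_space \<Rightarrow> ereal"
  assumes p: "p > 1" and hpr: "proper_fun \<phi>" and lsc: "lsc_fun \<phi>"
    and th: "(p - 1) / p \<le> \<theta>" "\<theta> < 1" and KL\<phi>: "KL_exponent \<phi> \<theta>"
    and g: "0 < \<gamma>" and gthr: "ereal \<gamma> < hprox_threshold \<phi> p"
  shows "KL_exponent (hmoreau \<phi> p \<gamma>) \<theta>"
proof -
  let ?e = "hmoreau \<phi> p \<gamma>"
  have th0: "\<theta> > 0"
  proof -
    have "(p - 1) / p > 0" using p by simp
    then show ?thesis using th by linarith
  qed
  obtain \<gamma>1 x0 where g1: "\<gamma> < \<gamma>1" and x0: "hmoreau \<phi> p \<gamma>1 x0 > -\<infinity>"
    using gthr unfolding hprox_threshold_def less_Sup_iff by auto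
  have nm: "\<And>y. \<phi> y \<noteq> -\<infinity>" using hpr by (simp add: proper_fun_def)
  obtain y0 where y0: "\<phi> y0 \<noteq> \<infinity>" using hpr by (auto simp: proper_fun_def)
  have "hmoreau \<phi> p \<gamma>1 x0 \<le> \<phi> y0 + ereal (norm (x0 - y0) powr p / (p * \<gamma>1))" by (rule env_le)
  then have "hmoreau \<phi> p \<gamma>1 x0 \<noteq> \<infinity>" using y0 by auto
  then obtain m where m: "hmoreau \<phi> p \<gamma>1 x0 = ereal m" using x0 by (cases "hmoreau \<phi> p \<gamma>1 x0") auto
  have LB: "\<And>y. ereal m \<le> \<phi> y + ereal (norm (x0 - y) powr p / (p * \<gamma>1))"
    using env_le[of \<phi> p \<gamma>1 x0] m by metis
  have "KL_exponent_at ?e xb \<theta>" if xb: "xb \<in> dom_subdiff ?e" for xb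
  proof (rule ccontr)
    assume nk: "\<not> KL_exponent_at ?e xb \<theta>"
    obtain xs us where S: "\<forall>k::nat. xs k \<in> cball xb (1 / (real k + 1)) \<and> xs k \<in> dom_subdiff ?e \<and>
     0 < \<bar>?e (xs k) - ?e xb\<bar> \<and> \<bar>?e (xs k) - ?e xb\<bar> < ereal (1 / (real k + 1)) \<and>
     us k \<in> limiting_subdiff ?e (xs k) \<and>
     norm (us k) \<le> 2 * (real_of_ereal \<bar>?e (xs k) - ?e xb\<bar>) powr \<theta> / ((real k + 1) * (1 - \<theta>))"
      using KL_fail_seq[OF th0 th(2) xb nk] by blast
    have S1: "xs k \<in> cball xb (1 / (real k + 1))" for k using S by blast
    have S2: "xs k \<in> dom_subdiff ?e" for k using S by blast
    have S3: "0 < \<bar>?e (xs k) - ?e xb\<bar>" for k using S by blast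
    have S4: "\<bar>?e (xs k) - ?e xb\<bar> < ereal (1 / (real k + 1))" for k using S by blast
    have S5: "us k \<in> limiting_subdiff ?e (xs k)" for k using S by blast
    have S6: "norm (us k) \<le> 2 * (real_of_ereal \<bar>?e (xs k) - ?e xb\<bar>) powr \<theta> / ((real k + 1) * (1 - \<theta>))" for k
      using S by blast
    have "\<exists>y. \<phi> y + ereal (norm (xs k - y) powr p / (p * \<gamma>)) = ?e (xs k) \<and> us k = Wf p \<gamma> (xs k - y)" for k
      by (rule limiting_env[OF p g g1 LB nm y0 lsc S5])
    then obtain ys where ys: "\<And>k. \<phi> (ys k) + ereal (norm (xs k - ys k) powr p / (p * \<gamma>)) = ?e (xs k)"
      and usk: "\<And>k. us k = Wf p \<gamma> (xs k - ys k)" by metis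
    obtain E0 where E0: "?e xb = ereal E0" using dom_finite[OF xb] by (cases "?e xb") auto
    have "\<exists>E. ?e (xs k) = ereal E" for k using dom_finite[OF S2[of k]] by (cases "?e (xs k)") auto
    then obtain E where E: "\<And>k. ?e (xs k) = ereal (E k)" by metis
    define s where "s k = norm (xs k - ys k)" for k
    define t where "t k = \<bar>E k - E0\<bar>" for k
    have tk: "t k > 0" "t k < 1 / (real k + 1)" for k
      using S3[of k] S4[of k] E[of k] E0 by (auto simp: t_def)
    have Mk: "norm (us k) \<le> 2 * t k powr \<theta> / ((real k + 1) * (1 - \<theta>))" for k
      using S6[of k] E[of k] E0 by (simp add: t_def)
    have nus: "norm (us k) = s k powr (p - 1) / \<gamma>" for k
      using norm_Wf[OF g] usk by (simp add: s_def)
    have sbound: "s k powr (p - 1) \<le> 2 * \<gamma> / ((real k + 1) * (1 - \<theta>))" for k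
    proof -
      have "t k powr \<theta> \<le> 1"
      proof -
        have "1 / (real k + 1) \<le> 1" by simp
        then have "t k \<le> 1" using tk[of k] by linarith
        then show ?thesis using tk[of k] th0 by (intro powr_le1) auto
      qed
      then have "2 * t k powr \<theta> / ((real k + 1) * (1 - \<theta>)) \<le> 2 / ((real k + 1) * (1 - \<theta>))"
        using th by (intro divide_right_mono) auto
      then have "s k powr (p - 1) / \<gamma> \<le> 2 / ((real k + 1) * (1 - \<theta>))" using Mk[of k] nus[of k] by simp
      then show ?thesis using g by (simp add: field_simps)
    qed
    have inv0': "(\<lambda>k. inverse (real k + 1)) \<longlonglongrightarrow> 0"
      using LIMSEQ_inverse_real_of_nat by (simp add: add.commute)
    have sp0: "(\<lambda>k. s k powr (p - 1)) \<longlonglongrightarrow> 0"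
    proof (rule tendsto_sandwich[where f = "\<lambda>_. 0" and h = "\<lambda>k. 2 * \<gamma> / ((real k + 1) * (1 - \<theta>))"])
      show "\<forall>\<^sub>F k in sequentially. 0 \<le> s k powr (p - 1)" by simp
      show "\<forall>\<^sub>F k in sequentially. s k powr (p - 1) \<le> 2 * \<gamma> / ((real k + 1) * (1 - \<theta>))"
        using sbound by simp
      show "(\<lambda>k. 0) \<longlonglongrightarrow> (0::real)" by simp
      have "(\<lambda>k. (2 * \<gamma> / (1 - \<theta>)) * inverse (real k + 1)) \<longlonglongrightarrow> (2 * \<gamma> / (1 - \<theta>)) * 0"
        by (intro tendsto_intros inv0')
      then show "(\<lambda>k. 2 * \<gamma> / ((real k + 1) * (1 - \<theta>))) \<longlonglongrightarrow> 0"
        by (simp add: divide_inverse mult_ac)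
    qed
    have s0: "s \<longlonglongrightarrow> 0"
    proof -
      have "(\<lambda>k. (s k powr (p - 1)) powr (1 / (p - 1))) \<longlonglongrightarrow> 0"
        using tendsto_zero_powrI[OF sp0 tendsto_const[of "1 / (p - 1)"]] p by simp
      moreover have "(s k powr (p - 1)) powr (1 / (p - 1)) = s k" for k
        using p by (simp add: powr_powr s_def)
      ultimately show ?thesis by simp
    qed
    have dxs: "norm (xs k - xb) \<le> 1 / (real k + 1)" for k
      using S1[of k] by (auto simp: dist_norm norm_minus_commute)
    have inv0: "(\<lambda>k. 1 / (real k + 1)) \<longlonglongrightarrow> 0"
      using inv0' by (simp add: divide_inverse)
    have xsl: "xs \<longlonglongrightarrow> xb"
    proof -
      have "(\<lambda>k. norm (xs k - xb)) \<longlonglongrightarrow> 0"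
      proof (rule tendsto_sandwich[where f = "\<lambda>_. 0" and h = "\<lambda>k. 1 / (real k + 1)"])
        show "\<forall>\<^sub>F k in sequentially. 0 \<le> norm (xs k - xb)" by simp
        show "\<forall>\<^sub>F k in sequentially. norm (xs k - xb) \<le> 1 / (real k + 1)" using dxs by simp
        show "(\<lambda>k. 0) \<longlonglongrightarrow> (0::real)" by simp
        show "(\<lambda>k. 1 / (real k + 1)) \<longlonglongrightarrow> 0" by (rule inv0)
      qed
      then show ?thesis by (simp add: tendsto_norm_zero_iff LIM_zero_iff)
    qed
    have seq: "s = (\<lambda>k. norm (xs k - ys k))" by (rule ext) (simp add: s_def)
    have "(\<lambda>k. norm (xs k - ys k)) \<longlonglongrightarrow> 0" using s0 unfolding seq .
    then have dl: "(\<lambda>k. xs k - ys k) \<longlonglongrightarrow> 0" by (simp only: tendsto_norm_zero_iff)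
    have ysl: "ys \<longlonglongrightarrow> xb"
    proof -
      have "(\<lambda>k. xs k - (xs k - ys k)) \<longlonglongrightarrow> xb - 0" using xsl dl by (intro tendsto_diff)
      then show ?thesis by simp
    qed
    have El: "(\<lambda>k. ereal (E k)) \<longlonglongrightarrow> ereal E0"
    proof -
      have "(\<lambda>k. t k) \<longlonglongrightarrow> 0"
      proof (rule tendsto_sandwich[where f = "\<lambda>_. 0" and h = "\<lambda>k. 1 / (real k + 1)"])
        show "\<forall>\<^sub>F k in sequentially. 0 \<le> t k" using tk by (simp add: less_imp_le)
        show "\<forall>\<^sub>F k in sequentially. t k \<le> 1 / (real k + 1)" using tk by (simp add: less_imp_le)
        show "(\<lambda>k. 0) \<longlonglongrightarrow> (0::real)" by simp
        show "(\<lambda>k. 1 / (real k + 1)) \<longlonglongrightarrow> 0" by (rule inv0)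
      qed
      moreover have "t = (\<lambda>k. \<bar>E k - E0\<bar>)" by (rule ext) (simp add: t_def)
      ultimately have "(\<lambda>k. \<bar>E k - E0\<bar>) \<longlonglongrightarrow> 0" by simp
      then have "E \<longlonglongrightarrow> E0" by (simp add: tendsto_rabs_zero_iff LIM_zero_iff)
      then show ?thesis by (rule tendsto_ereal)
    qed
    have Nl: "(\<lambda>k. norm (xs k - ys k) powr p / (p * \<gamma>)) \<longlonglongrightarrow> norm (0::'a) powr p / (p * \<gamma>)"
      using isCont_tendsto_compose[OF N_cont[OF p g] dl] .
    have "(\<lambda>k. \<phi> (ys k) + ereal (norm (xs k - ys k) powr p / (p * \<gamma>))) \<longlonglongrightarrow> ereal E0"
      using El by (simp add: ys E)
    from lsc_seq_le[OF lsc ysl this Nl]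
    have "\<phi> xb \<le> ?e xb" using E0 by simp
    moreover have "?e xb \<le> \<phi> xb" using env_le[of \<phi> p \<gamma> xb xb] by simp
    ultimately have exb: "\<phi> xb = ?e xb" by simp
    have "\<phi> xb + ereal (norm (xb - xb) powr p / (p * \<gamma>)) = ?e xb" using exb by simp
    from prox_frechet[OF p g this] have "Wf p \<gamma> (xb - xb) \<in> frechet_subdiff \<phi> xb"
      using E0 by simp
    then have xbd: "xb \<in> dom_subdiff \<phi>" by (auto simp: dom_subdiff_def dest: frechet_imp_limiting)
    then have "KL_exponent_at \<phi> xb \<theta>" using KL\<phi> by (simp add: KL_exponent_def)
    then obtain c where c: "c > 0" and KLc: "KL_with \<phi> xb (\<lambda>t. c * t powr (1 - \<theta>))"
      by (auto simp: KL_exponent_at_def)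
    have fxb: "\<bar>\<phi> xb\<bar> \<noteq> \<infinity>" using exb E0 by simp
    obtain r \<eta>0 where r: "r > 0" and eta0: "\<eta>0 > 0" and KB:
      "\<And>y. y \<in> cball xb r \<Longrightarrow> y \<in> dom_subdiff \<phi> \<Longrightarrow> 0 < \<bar>\<phi> y - \<phi> xb\<bar> \<Longrightarrow> \<bar>\<phi> y - \<phi> xb\<bar> < ereal \<eta>0 \<Longrightarrow>
       (real_of_ereal \<bar>\<phi> y - \<phi> xb\<bar>) powr \<theta> \<le> c * (1 - \<theta>) * infdist 0 (limiting_subdiff \<phi> y)"
      using KL_bound[OF KLc c th0 th(2) fxb] by metis
    define C where "C = c * (1 - \<theta>)"
    define K where "K = 2 * (C + \<gamma> * (p * \<gamma>) powr (- \<theta>))"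
    have C0: "C \<ge> 0" using c th by (simp add: C_def)
    define Q where "Q = max (max 1 (2 * \<gamma> / (1 - \<theta>) + 1)) (max ((1 + 2 / ((1 - \<theta>) * p)) / \<eta>0) (2 * K / (1 - \<theta>) + 1))"
    obtain kQ :: nat where kQ: "Q \<le> real kQ" using real_arch_simple by blast
    have "\<forall>\<^sub>F k in sequentially. dist (ys k) xb < r" using ysl r by (rule tendstoD)
    then obtain kr where kr: "\<And>k. k \<ge> kr \<Longrightarrow> dist (ys k) xb < r" by (auto simp: eventually_sequentially)
    define k where "k = max kQ kr"
    define L where "L = real k + 1"
    have LQ: "Q < L" using kQ by (simp add: L_def k_def)
    have L1: "L \<ge> 1" using LQ by (simp add: Q_def)
    have Lpos: "L > 0" using L1 by simp
    have LL1: "L > 2 * \<gamma> / (1 - \<theta>)" using LQ by (simp add: Q_def)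
    have LL2: "1 / L + 2 * \<gamma> / (L * (1 - \<theta>) * (p * \<gamma>)) \<le> \<eta>0"
    proof -
      have "(1 + 2 / ((1 - \<theta>) * p)) / \<eta>0 < L" using LQ by (simp add: Q_def)
      then have "1 + 2 / ((1 - \<theta>) * p) \<le> L * \<eta>0" using eta0 by (simp add: field_simps)
      moreover have "1 / L + 2 * \<gamma> / (L * (1 - \<theta>) * (p * \<gamma>)) = (1 + 2 / ((1 - \<theta>) * p)) / L"
        using g p th Lpos by (simp add: field_simps)
      ultimately show ?thesis using Lpos by (simp add: field_simps)
    qed
    have LL3: "L * (1 - \<theta>) > 2 * K"
    proof -
      have "2 * K / (1 - \<theta>) < L" using LQ by (simp add: Q_def)
      then show ?thesis using th by (simp add: field_simps)
    qed
    have yr: "ys k \<in> cball xb r" using kr[of k] by (simp add: k_def dist_commute)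
    have Wsub: "us k \<in> frechet_subdiff \<phi> (ys k)"
      using prox_frechet[OF p g ys[of k]] E[of k] usk[of k] by simp
    have ykd: "ys k \<in> dom_subdiff \<phi>" using frechet_imp_limiting[OF Wsub] by (auto simp: dom_subdiff_def)
    obtain F where F: "\<phi> (ys k) = ereal F" using dom_finite[OF ykd] by (cases "\<phi> (ys k)") auto
    have Fk: "F + s k powr p / (p * \<gamma>) = E k" using ys[of k] F E[of k] by (simp add: s_def)
    have teq: "t k = \<bar>(F - E0) + s k powr p / (p * \<gamma>)\<bar>" using Fk by (simp add: t_def algebra_simps)
    show False
    proof (rule final_contra[OF p g th tk[of k, folded L_def] L1 Mk[of k, folded L_def] _ _ teq _ C0 LL1 LL2 LL3[unfolded K_def]])
      show "s k \<ge> 0" by (simp add: s_def)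
      show "s k powr (p - 1) / \<gamma> \<le> norm (us k)" using nus by simp
      assume a0: "F - E0 \<noteq> 0" and aeta: "\<bar>F - E0\<bar> < \<eta>0"
      have "\<bar>\<phi> (ys k) - \<phi> xb\<bar> = ereal \<bar>F - E0\<bar>" using F exb E0 by simp
      then have "\<bar>F - E0\<bar> powr \<theta> \<le> c * (1 - \<theta>) * infdist 0 (limiting_subdiff \<phi> (ys k))"
        using KB[OF yr ykd] a0 aeta by simp
      also have "infdist 0 (limiting_subdiff \<phi> (ys k)) \<le> norm (us k)"
        using infdist_le[OF frechet_imp_limiting[OF Wsub], of 0] by simp
      finally show "\<bar>F - E0\<bar> powr \<theta> \<le> C * norm (us k)"
        using c th by (simp add: C_def mult_left_mono)
    qed
  qed
  then show ?thesis unfolding KL_exponent_def by blast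
qed


theorem theorem4:
  fixes \<phi> :: "real ^ 'n \<Rightarrow> ereal" and p \<theta> :: real
  assumes "p > 1"
    and "proper_fun \<phi>" and "lsc_fun \<phi>"
    and "(p - 1) / p \<le> \<theta>" and "\<theta> < 1"
    and "KL_exponent \<phi> \<theta>"
  shows "(\<forall>\<gamma>>0. KL_exponent
            (\<lambda>(x, y). \<phi> y + ereal (norm (x - y) powr p / (p * \<gamma>))) \<theta>)
       \<and> (hprox_bounded \<phi> p \<and> hprox_threshold \<phi> p > 0 \<longrightarrow>
            (\<forall>\<gamma>. 0 < \<gamma> \<and> ereal \<gamma> < hprox_threshold \<phi> p \<longrightarrow>
                  KL_exponent (hmoreau \<phi> p \<gamma>) \<theta>))"
  using partA[OF assms(1) _ assms(4,5,6)] partB[OF assms(1,2,3,4,5,6)] by blast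

end
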